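(* Let $n\ge 1$, $d\ge r\ge 1$, $\mathrm{St}(d,r)=\{x\in\mathbb{R}^{d\times r}:x^\top x=I_r\}$ with tangent spaces $\mathrm{T}_x\mathcal{M}=\{\xi: x^\top\xi+\xi^\top x=0\}$. Let $W\in\mathbb{R}^{n\times n}$ be a symmetric, nonnegative, doubly stochastic mixing matrix of a connected undirected graph (i.e. $W_{ij}>0$ only if $i=j$ or $\{i,j\}$ is an edge), with $\sigma_2\in(0,1)$ its second largest singular value. Let $\mathcal{R}$ be a retraction on $\mathrm{St}(d,r)$ and $M>0$ a constant such that for all $x,y\in\mathrm{St}(d,r)$ and $\xi\in\mathrm{T}_x\mathcal{M}$: $\|\mathcal{R}_x(\xi)-y\|_F\le\|x+\xi-y\|_F$ and $\|\mathcal{R}_x(\xi)-(x+\xi)\|_F\le M\|\xi\|_F^2$. Let $\delta_1,\delta_2>0$ satisfy $\delta_1\le\frac{1}{5\sqrt r}\delta_2$ and $\delta_2\le\frac16$. Let $t\ge\lceil\log_{\sigma_2}(\frac{1}{2\sqrt n})\rceil$ be an integer and $0<\alpha\le\min\{\frac{\Phi}{2L_t},1,\frac1M\}$, where $\Phi=2-\delta_2^2$. If $\mathbf{x}_k=(x_{1,k},\dots,x_{n,k})\in\mathcal{N}$ and, for all $i\in[n]$, $$x_{i,k+1}=\mathcal{R}_{x_{i,k}}\big(-\alpha\,\mathrm{grad}\,\varphi_i^t(\mathbf{x}_k)+\beta v_{i,k}\big)$$ with $\beta\ge 0$ and $v_{i,k}\in\mathrm{T}_{x_{i,k}}\mathcal{M}$,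 then, writing $\mathbf{v}_k=(v_{1,k},\dots,v_{n,k})$, $$\|\mathbf{x}_{k+1}-\bar{\mathbf{x}}_{k+1}\|_F\le\rho_t\|\mathbf{x}_k-\bar{\mathbf{x}}_k\|_F+\beta\|\mathbf{v}_k\|_F,$$ where $\rho_t=\sqrt{1-\gamma_t\alpha}$ with $\gamma_t=(1-4r\delta_1^2)(1-\frac{\delta_2^2}{2})\mu_t$ and $\mu_t=1-\lambda_2(W^t)$.
   Context: For $\mathbf{x}=(x_1,\dots,x_n)\in\mathrm{St}(d,r)^n$, $\|\mathbf{x}\|_F^2=\sum_i\|x_i\|_F^2$. The induced arithmetic mean (IAM) is $\bar x\in\arg\min_{y\in\mathrm{St}(d,r)}\sum_{i=1}^n\|y-x_i\|_F^2$, and $\bar{\mathbf{x}}=(\bar x,\dots,\bar x)$; $\bar{\mathbf{x}}_k,\bar{\mathbf{x}}_{k+1}$ denote these for $\mathbf{x}_k,\mathbf{x}_{k+1}$. The consensus function is $\varphi^t(\mathbf{x})=\frac14\sum_{i,j}W^t_{ij}\|x_i-x_j\|_F^2$ with $W^t_{ij}$ the entries of the matrix power $W^t$; $\mathrm{grad}\,\varphi^t_i(\mathbf{x})=\mathcal{P}_{\mathrm{T}_{x_i}\mathcal{M}}\big(x_i-\sum_j W^t_{ij}x_j\big)$ where $\mathcal{P}_{\mathrm{T}_x\mathcal{M}}(y)=y-\frac12x(x^\top y+y^\top x)$. $L_t=1-\lambda_n(W^t)$ and $\lambda_2(W^t)$, $\lambda_n(W^t)$ are the second largest and smallest eigenvalues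 of $W^t$. Neighborhoods: $\mathcal{N}_1=\{\mathbf{x}:\|\mathbf{x}-\bar{\mathbf{x}}\|_F^2\le n\delta_1^2\}$, $\mathcal{N}_2=\{\mathbf{x}:\max_i\|x_i-\bar x\|_F\le\delta_2\}$, $\mathcal{N}=\mathcal{N}_1\cap\mathcal{N}_2$. *)

theory Defs
  imports "HOL-Analysis.Analysis" "HOL-Computational_Algebra.Polynomial"
begin

text \<open>Matrices are HOL-Analysis matrices \<open>real^'c^'r\<close>; the Euclidean norm on this
  type is exactly the Frobenius norm.\<close>

definition stiefel :: "(real^'r^'d) set" where
  "stiefel = {x. transpose x ** x = mat 1}"

definition tangent :: "real^'r^'d \<Rightarrow> (real^'r^'d) set" where
  "tangent x = {\<xi>. transpose x ** \<xi> + transpose \<xi> ** x = 0}"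

definition proj_tangent :: "real^'r^'d \<Rightarrow> real^'r^'d \<Rightarrow> real^'r^'d" where
  "proj_tangent x y = y - (1/2) *\<^sub>R (x ** (transpose x ** y + transpose y ** x))"

primrec matpow :: "real^'n^'n \<Rightarrow> nat \<Rightarrow> real^'n^'n" where
  "matpow A 0 = mat 1"
| "matpow A (Suc k) = A ** matpow A k"

definition charpoly :: "real^'n^'n \<Rightarrow> real poly" where
  "charpoly A = det (\<chi> i j. (if i = j then [:0, 1:] else 0) - [:A $ i $ j:])"

definition eigs_desc :: "real^'n^'n \<Rightarrow> real list" where
  "eigs_desc A = rev (sorted_list_of_multiset (proots (charpoly A)))"

(* k-th largest eigenvalue, 1-indexed: lambda_1 >= lambda_2 >= ... >= lambda_n *)
definition eigval :: "real^'n^'n \<Rightarrow> nat \<Rightarrow> real" where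
  "eigval A k = eigs_desc A ! (k - 1)"

definition eigval_min :: "real^'n^'n \<Rightarrow> real" where
  "eigval_min A = eigval A CARD('n)"

definition singval :: "real^'n^'n \<Rightarrow> nat \<Rightarrow> real" where
  "singval A k = sqrt (eigval (transpose A ** A) k)"

definition tnorm :: "('n \<Rightarrow> real^'r^'d) \<Rightarrow> real" where
  "tnorm x = sqrt (\<Sum>i\<in>UNIV. (norm (x i))\<^sup>2)"

definition is_IAM :: "('n::finite \<Rightarrow> real^'r^'d) \<Rightarrow> real^'r^'d \<Rightarrow> bool" where
  "is_IAM x xb \<longleftrightarrow> xb \<in> stiefel \<and>
     (\<forall>y\<in>stiefel. (\<Sum>i\<in>UNIV. (norm (xb - x i))\<^sup>2) \<le> (\<Sum>i\<in>UNIV. (norm (y - x i))\<^sup>2))"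

(* Riemannian gradient of the i-th component of the consensus function phi^t *)
definition grad_phi :: "real^'n^'n \<Rightarrow> nat \<Rightarrow> ('n::finite \<Rightarrow> real^'r^'d) \<Rightarrow> 'n \<Rightarrow> real^'r^'d" where
  "grad_phi W t x i = proj_tangent (x i) (x i - (\<Sum>j\<in>UNIV. (matpow W t $ i $ j) *\<^sub>R x j))"

definition is_retraction :: "(real^'r^'d \<Rightarrow> real^'r^'d \<Rightarrow> real^'r^'d) \<Rightarrow> bool" where
  "is_retraction R \<longleftrightarrow>
     continuous_on {(x, \<xi>). x \<in> stiefel \<and> \<xi> \<in> tangent x} (\<lambda>(x, \<xi>). R x \<xi>) \<and>
     (\<forall>x\<in>stiefel. R x 0 = x \<and>
        (\<forall>\<xi>\<in>tangent x. R x \<xi> \<in> stiefel \<and>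
           ((\<lambda>s. R x (s *\<^sub>R \<xi>)) has_vector_derivative \<xi>) (at 0)))"

definition connected_graph :: "('n \<Rightarrow> 'n \<Rightarrow> bool) \<Rightarrow> bool" where
  "connected_graph E \<longleftrightarrow> (\<forall>i j. E i j \<longrightarrow> E j i) \<and> (\<forall>i. \<not> E i i) \<and>
     (\<forall>i j. (i, j) \<in> {(a, b). E a b}\<^sup>*)"

definition mixing_matrix :: "('n::finite \<Rightarrow> 'n \<Rightarrow> bool) \<Rightarrow> real^'n^'n \<Rightarrow> bool" where
  "mixing_matrix E W \<longleftrightarrow> transpose W = W \<and> (\<forall>i j. W $ i $ j \<ge> 0) \<and>
     (\<forall>i. (\<Sum>j\<in>UNIV. W $ i $ j) = 1) \<and> (\<forall>j. (\<Sum>i\<in>UNIV. W $ i $ j) = 1) \<and>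
     (\<forall>i j. W $ i $ j > 0 \<longrightarrow> i = j \<or> E i j)"

end

theory Submission
  imports Defs
begin


lemma sym_quad:
  fixes A :: "real^'n^'n"
  assumes "transpose A = A"
  shows "u \<bullet> (A *v w) = w \<bullet> (A *v u)"
proof -
  have "u \<bullet> (A *v w) = (u v* A) \<bullet> w" by (simp add: dot_lmul_matrix)
  also have "u v* A = transpose A *v u" by simp
  also have "... = A *v u" using assms by simp
  finally show ?thesis by (simp add: inner_commute)
qed

lemma quad_add:
  fixes A :: "real^'n^'n"
  assumes "transpose A = A"
  shows "(u + s *\<^sub>R w) \<bullet> (A *v (u + s *\<^sub>R w)) =
     u \<bullet> (A *v u) + 2 * s * (w \<bullet> (A *v u)) + s^2 * (w \<bullet> (A *v w))"
proof -
  have "u \<bullet> (A *v w) = w \<bullet> (A *v u)" by (rule sym_quad[OF assms])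
  then show ?thesis
    by (simp add: matrix_vector_right_distrib inner_add_left inner_add_right
        matrix_vector_mult_scaleR power2_eq_square algebra_simps)
qed

lemma neg_aux: fixes a b :: real assumes "b \<ge> 0" "a > 0"
  shows "2 * (-a/(b+1)) * a + (-a/(b+1))^2 * b < 0"
proof -
  define s where "s = -a/(b+1)"
  have s0: "s < 0" unfolding s_def using assms by (simp add: divide_neg_pos)
  have "s * b \<ge> -a" unfolding s_def using assms by (simp add: field_simps)
  then have "2 * a + s * b > 0" using assms by linarith
  then have "s * (2 * a + s * b) < 0" using s0 by (simp add: mult_neg_pos)
  then show ?thesis unfolding s_def[symmetric] by (simp add: power2_eq_square algebra_simps)
qed

lemma eigvec_exists:
  fixes A :: "real^'n^'n"
  assumes sym: "transpose A = A" and S: "subspace S" "S \<noteq> {0}"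
    and inv: "\<And>u. u \<in> S \<Longrightarrow> A *v u \<in> S"
  shows "\<exists>u\<in>S. norm u = 1 \<and> (\<exists>l. A *v u = l *\<^sub>R u)"
proof -
  define K where "K = S \<inter> sphere 0 1"
  have cK: "compact K" unfolding K_def
    using closed_subspace[OF S(1)] compact_sphere by blast
  obtain v where v: "v \<in> S" "v \<noteq> 0" using S subspace_0 by blast
  have vK: "(1/norm v) *\<^sub>R v \<in> K" unfolding K_def using v subspace_scale[OF S(1)] by auto
  have cont: "continuous_on K (\<lambda>u. u \<bullet> (A *v u))"
    by (intro continuous_intros linear_continuous_on bounded_linear_intros
        matrix_vector_mul_bounded_linear)
  obtain u0 where u0: "u0 \<in> K" "\<And>y. y \<in> K \<Longrightarrow> y \<bullet> (A *v y) \<le> u0 \<bullet> (A *v u0)"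
    using continuous_attains_sup[OF cK _ cont] vK by blast
  define lam where "lam = u0 \<bullet> (A *v u0)"
  have u0S: "u0 \<in> S" and nu0: "norm u0 = 1" using u0 K_def by auto
  have claim1: "y \<bullet> (A *v y) \<le> lam * (norm y)^2" if "y \<in> S" for y
  proof (cases "y = 0")
    case True then show ?thesis by simp
  next
    case False
    let ?c = "1 / norm y"
    have "?c *\<^sub>R y \<in> K" unfolding K_def using that False subspace_scale[OF S(1)] by auto
    then have "(?c *\<^sub>R y) \<bullet> (A *v (?c *\<^sub>R y)) \<le> lam" unfolding lam_def by (rule u0(2))
    then have "?c^2 * (y \<bullet> (A *v y)) \<le> lam"
      by (simp add: power2_eq_square matrix_vector_mult_scaleR)
    then have "?c^2 * (y \<bullet> (A *v y)) * (norm y)^2 \<le> lam * (norm y)^2"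
      by (simp add: mult_right_mono)
    then show ?thesis using False by (simp add: power2_eq_square field_simps)
  qed
  define w where "w = lam *\<^sub>R u0 - A *v u0"
  have wS: "w \<in> S" unfolding w_def using u0S inv subspace_scale[OF S(1)] subspace_diff[OF S(1)] by blast
  define b where "b = lam * (norm w)^2 - w \<bullet> (A *v w)"
  have b0: "b \<ge> 0" using claim1[OF wS] b_def by simp
  have key: "0 \<le> 2 * s * (norm w)^2 + s^2 * b" for s
  proof -
    have "u0 + s *\<^sub>R w \<in> S" using u0S wS subspace_scale[OF S(1)] subspace_add[OF S(1)] by blast
    from claim1[OF this] have "(u0 + s *\<^sub>R w) \<bullet> (A *v (u0 + s *\<^sub>R w)) \<le> lam * (norm (u0 + s *\<^sub>R w))^2" .
    moreover have "(norm (u0 + s *\<^sub>R w))^2 = 1 + 2 * s * (u0 \<bullet> w) + s^2 * (norm w)^2"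
    proof -
      have "u0 \<bullet> u0 = 1" using nu0 by (simp add: dot_square_norm)
      then show ?thesis by (simp only: power2_norm_eq_inner inner_add_left inner_add_right inner_scaleR_left inner_scaleR_right inner_commute[of w u0]) (simp add: power2_eq_square algebra_simps)
    qed
    moreover have "w \<bullet> w = lam * (u0 \<bullet> w) - w \<bullet> (A *v u0)"
    proof -
      have "w \<bullet> w = w \<bullet> (lam *\<^sub>R u0 - A *v u0)" by (simp only: w_def[symmetric])
      then show ?thesis by (simp add: inner_diff_right inner_commute)
    qed
    ultimately have
      i1: "lam + 2 * s * (w \<bullet> (A *v u0)) + s^2 * (w \<bullet> (A *v w)) \<le> lam * (1 + 2 * s * (u0 \<bullet> w) + s^2 * (norm w)^2)"
      and i2: "(norm w)^2 = lam * (u0 \<bullet> w) - w \<bullet> (A *v u0)"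
      using quad_add[OF sym, of u0 s w] unfolding lam_def by (auto simp: power2_norm_eq_inner)
    have "2 * s * (norm w)^2 + s^2 * b = lam * (1 + 2 * s * (u0 \<bullet> w) + s^2 * (norm w)^2)
        - (lam + 2 * s * (w \<bullet> (A *v u0)) + s^2 * (w \<bullet> (A *v w)))"
      unfolding b_def i2 by (simp add: algebra_simps)
    then show ?thesis using i1 by linarith
  qed
  have "w = 0"
  proof (rule ccontr)
    assume "w \<noteq> 0"
    then have a: "(norm w)^2 > 0" by simp
    define s where "s = -((norm w)^2) / (b + 1)"
    have "2 * s * (norm w)^2 + s^2 * b < 0" unfolding s_def using neg_aux[OF b0 a] .
    then show False using key[of s] by simp
  qed
  then have "A *v u0 = lam *\<^sub>R u0" unfolding w_def by simp
  then show ?thesis using u0S nu0 by blast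
qed

lemma eigbasis:
  fixes A :: "real^'n^'n" and e0 :: "real^'n"
  assumes sym: "transpose A = A" and e0: "norm e0 = 1" "A *v e0 = l0 *\<^sub>R e0"
  shows "\<exists>U. finite U \<and> e0 \<in> U \<and> card U = CARD('n) \<and>
     (\<forall>u\<in>U. norm u = 1 \<and> (\<exists>l. A *v u = l *\<^sub>R u)) \<and> pairwise orthogonal U"
proof -
  have step: "\<exists>U. finite U \<and> e0 \<in> U \<and> card U = k \<and>
     (\<forall>u\<in>U. norm u = 1 \<and> (\<exists>l. A *v u = l *\<^sub>R u)) \<and> pairwise orthogonal U"
    if "1 \<le> k" "k \<le> CARD('n)" for k
    using that
  proof (induction k)
    case 0 then show ?case by simp
  next
    case (Suc k)
    show ?case
    proof (cases "k = 0")
      case True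
      then show ?thesis using e0 by (intro exI[of _ "{e0}"]) (auto simp: pairwise_def)
    next
      case False
      then obtain U where U: "finite U" "e0 \<in> U" "card U = k"
        "\<forall>u\<in>U. norm u = 1 \<and> (\<exists>l. A *v u = l *\<^sub>R u)" "pairwise orthogonal U"
        using Suc by auto
      define S where "S = {y. \<forall>x\<in>U. orthogonal x y}"
      have "dim U \<le> card U" using U(1) by (intro dim_le_card) (auto intro: span_base)
      then have "dim U < DIM(real^'n)" using U(3) Suc(3) by simp
      then obtain y where y: "y \<noteq> 0" "\<And>z. z \<in> span U \<Longrightarrow> orthogonal y z"
        using orthogonal_to_subspace_exists by metis
      have "y \<in> S" unfolding S_def using y(2) span_base orthogonal_commute by blast
      then have Sne: "S \<noteq> {0}" using y(1) by blast
      have subS: "subspace S" unfolding S_def by (rule subspace_orthogonal_to_vectors)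
      have invS: "A *v v \<in> S" if "v \<in> S" for v
        unfolding S_def mem_Collect_eq
      proof (intro ballI)
        fix x assume "x \<in> U"
        then obtain l where l: "A *v x = l *\<^sub>R x" using U(4) by blast
        have "x \<bullet> (A *v v) = v \<bullet> (A *v x)" by (rule sym_quad[OF sym])
        also have "... = l * (v \<bullet> x)" using l by simp
        also have "v \<bullet> x = 0" using that \<open>x \<in> U\<close> unfolding S_def orthogonal_def
          by (auto simp: inner_commute)
        finally show "orthogonal x (A *v v)" by (simp add: orthogonal_def)
      qed
      obtain e where e: "e \<in> S" "norm e = 1" "\<exists>l. A *v e = l *\<^sub>R e"
        using eigvec_exists[OF sym subS Sne invS] by blast
      have eU: "e \<notin> U"
      proof
        assume "e \<in> U"
        then have "orthogonal e e" using e(1) unfolding S_def by blast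
        then show False using e(2) by (simp add: orthogonal_def)
      qed
      show ?thesis
      proof (intro exI[of _ "insert e U"] conjI)
        show "pairwise orthogonal (insert e U)"
          using U(5) e(1) unfolding S_def
          by (auto simp: pairwise_insert orthogonal_commute)
      qed (use U e eU Suc in auto)
    qed
  qed
  from step[of "CARD('n)"] show ?thesis by simp
qed

lemma spectral:
  fixes A :: "real^'n^'n" and e0 :: "real^'n"
  assumes sym: "transpose A = A" and e0: "norm e0 = 1" "A *v e0 = l0 *\<^sub>R e0"
  shows "\<exists>(Q::real^'n^'n) l k0. transpose Q ** Q = mat 1 \<and> Q ** transpose Q = mat 1 \<and>
     (\<forall>i j. A$i$j = (\<Sum>k\<in>UNIV. Q$i$k * l k * Q$j$k)) \<and> (\<forall>i. Q$i$k0 = e0$i) \<and> l k0 = l0"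
proof -
  obtain U where U: "finite U" "e0 \<in> U" "card U = CARD('n)"
     "\<forall>u\<in>U. norm u = 1 \<and> (\<exists>l. A *v u = l *\<^sub>R u)" "pairwise orthogonal U"
    using eigbasis[OF sym e0] by blast
  obtain f where f: "bij_betw f (UNIV::'n set) U"
    using finite_same_card_bij[of "UNIV::'n set" U] U by auto
  have fU: "f k \<in> U" for k using f by (auto simp: bij_betw_def)
  define l where "l k = (SOME c. A *v f k = c *\<^sub>R f k)" for k
  have fl: "A *v f k = l k *\<^sub>R f k" for k
    unfolding l_def using U(4) fU[of k] by (metis (mono_tags, lifting) someI_ex)
  have fn: "norm (f k) = 1" for k using U(4) fU by blast
  have forth: "f k \<bullet> f m = (if k = m then 1 else 0)" for k m
  proof (cases "k = m")
    case True then show ?thesis using fn[of k] by (simp add: dot_square_norm)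
  next
    case False
    then have "f k \<noteq> f m" using f by (auto simp: bij_betw_def inj_on_def)
    then show ?thesis using U(5) fU[of k] fU[of m] False by (auto simp: pairwise_def orthogonal_def)
  qed
  obtain k0 where k0: "f k0 = e0" using f U(2) by (metis bij_betw_inv_into_right UNIV_I bij_betw_inv_into bij_betwE)
  define Q where "Q = (\<chi> i k. f k $ i)"
  have QtQ: "transpose Q ** Q = mat 1"
  proof -
    have "(transpose Q ** Q) $ k $ m = mat 1 $ k $ m" for k m
    proof -
      have "(transpose Q ** Q) $ k $ m = (\<Sum>i\<in>UNIV. f k $ i * f m $ i)"
        by (simp add: matrix_matrix_mult_def transpose_def Q_def)
      also have "... = f k \<bullet> f m" by (simp add: inner_vec_def)
      finally show ?thesis using forth by (simp add: mat_def)
    qed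
    then show ?thesis by (simp add: vec_eq_iff)
  qed
  have QQt: "Q ** transpose Q = mat 1" using QtQ matrix_left_right_inverse by blast
  have AQ: "(A ** Q) $ i $ k = l k * Q $ i $ k" for i k
  proof -
    have "(A ** Q) $ i $ k = (A *v f k) $ i"
      by (simp add: matrix_matrix_mult_def matrix_vector_mult_def Q_def)
    then show ?thesis using fl by (simp add: Q_def)
  qed
  have dec: "A$i$j = (\<Sum>k\<in>UNIV. Q$i$k * l k * Q$j$k)" for i j
  proof -
    have "A = (A ** Q) ** transpose Q" using QQt by (metis matrix_mul_assoc matrix_mul_rid)
    then have "A$i$j = ((A ** Q) ** transpose Q)$i$j" by simp
    also have "... = (\<Sum>k\<in>UNIV. (A ** Q)$i$k * Q$j$k)"
      by (simp add: matrix_matrix_mult_def transpose_def)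
    finally show ?thesis using AQ by (simp add: algebra_simps)
  qed
  have "l k0 *\<^sub>R e0 = l0 *\<^sub>R e0" using fl[of k0] e0(2) k0 by auto
  then have "l k0 = l0" using e0(1) by (metis norm_zero scaleR_cancel_right zero_neq_one)
  moreover have "\<forall>i. Q$i$k0 = e0$i" using k0 by (simp add: Q_def)
  moreover have "\<forall>i j. A$i$j = (\<Sum>k\<in>UNIV. Q$i$k * l k * Q$j$k)" using dec by blast
  ultimately show ?thesis using QtQ QQt by blast
qed
lemma lin_aux: fixes a b c :: real
  shows "[:a:] * [:-c, 1:] * [:b:] = [:a*b:] * [:0,1:] - [:a*c*b:]"
  by (simp add: algebra_simps)

lemma charpoly_dec:
  fixes A Q :: "real^'n^'n" and l :: "'n \<Rightarrow> real"
  assumes QQt: "Q ** transpose Q = mat 1"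
    and dec: "\<And>i j. A$i$j = (\<Sum>k\<in>UNIV. Q$i$k * l k * Q$j$k)"
  shows "charpoly A = (\<Prod>k\<in>UNIV. [:- l k, 1:])"
proof -
  define P :: "real poly^'n^'n" where "P = (\<chi> i j. [:Q$i$j:])"
  define Dg :: "real poly^'n^'n" where "Dg = (\<chi> i j. if i = j then [:- l i, 1:] else 0)"
  define C :: "real poly^'n^'n" where "C = (\<chi> i j. (if i = j then [:0, 1:] else 0) - [:A $ i $ j:])"
  have QQ: "(\<Sum>k\<in>UNIV. Q$i$k * Q$j$k) = (if i = j then 1 else 0)" for i j
  proof -
    have "(\<Sum>k\<in>UNIV. Q$i$k * Q$j$k) = (Q ** transpose Q)$i$j"
      by (simp add: matrix_matrix_mult_def transpose_def)
    then show ?thesis using QQt by (simp add: mat_def)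
  qed
  have PD: "(P ** Dg)$i$k = [:Q$i$k:] * [:- l k, 1:]" for i k
  proof -
    have "(P ** Dg)$i$k = (\<Sum>m\<in>UNIV. (if m = k then [:Q$i$k:] * [:- l k, 1:] else 0))"
      unfolding matrix_matrix_mult_def P_def Dg_def by (simp only: vec_lambda_beta) (rule sum.cong, auto simp del: mult_pCons_left)
    then show ?thesis by simp
  qed
  have CPD: "C = P ** Dg ** transpose P"
  proof -
    have "C$i$j = (P ** Dg ** transpose P)$i$j" for i j
    proof -
      have "(P ** Dg ** transpose P)$i$j = (\<Sum>k\<in>UNIV. [:Q$i$k:] * [:- l k, 1:] * [:Q$j$k:])"
      proof -
        have "(P ** Dg ** transpose P)$i$j = (\<Sum>k\<in>UNIV. (P ** Dg)$i$k * (transpose P)$k$j)"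
          by (simp only: matrix_matrix_mult_def[of "P ** Dg"] vec_lambda_beta)
        then show ?thesis by (simp only: PD) (simp add: transpose_def P_def del: mult_pCons_left)
      qed
      also have "... = (\<Sum>k\<in>UNIV. [:Q$i$k * Q$j$k:] * [:0,1:] - [:Q$i$k * l k * Q$j$k:])"
        by (simp add: lin_aux mult.commute mult.left_commute)
      also have "... = [:\<Sum>k\<in>UNIV. Q$i$k * Q$j$k:] * [:0,1:] - [:\<Sum>k\<in>UNIV. Q$i$k * l k * Q$j$k:]"
        by (simp only: sum_subtractf sum_distrib_right[symmetric] sum_to_poly)
      also have "... = C$i$j" unfolding QQ dec[symmetric] C_def by simp
      finally show ?thesis by simp
    qed
    then show ?thesis by (simp add: vec_eq_iff)
  qed
  have PP: "P ** transpose P = mat 1"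
  proof -
    have "(P ** transpose P)$i$j = mat 1 $ i $ j" for i j
    proof -
      have "(P ** transpose P)$i$j = (\<Sum>k\<in>UNIV. [:Q$i$k * Q$j$k:])"
        by (simp add: matrix_matrix_mult_def transpose_def P_def mult.commute)
      also have "... = [:if i = j then 1 else 0:]" by (simp only: sum_to_poly QQ)
      finally show ?thesis by (simp add: mat_def)
    qed
    then show ?thesis by (simp add: vec_eq_iff)
  qed
  have "charpoly A = det C" unfolding charpoly_def C_def ..
  also have "... = det Dg * (det P * det (transpose P))"
    unfolding CPD det_mul by (simp add: algebra_simps)
  also have "det P * det (transpose P) = 1"
    using PP det_mul[of P "transpose P"] by simp
  also have "det Dg = (\<Prod>k\<in>UNIV. [:- l k, 1:])"
    by (subst det_diagonal) (auto simp: Dg_def)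
  finally show ?thesis by simp
qed

lemma size_sum_singletons:
  "finite K \<Longrightarrow> size (\<Sum>k\<in>K. {#f k#}) = card K"
  by (induction K rule: finite_induct) auto

lemma mem_sum_singletons:
  "finite K \<Longrightarrow> x \<in># (\<Sum>k\<in>K. {#f k#}) \<longleftrightarrow> x \<in> f ` K"
  by (induction K rule: finite_induct) auto

lemma eig_facts:
  fixes A :: "real^'n^'n" and l :: "'n \<Rightarrow> real"
  assumes cp: "charpoly A = (\<Prod>k\<in>UNIV. [:- l k, 1:])"
  shows "eigval_min A \<le> l k"
    and "(\<And>m. l m \<le> l k0) \<Longrightarrow> k \<noteq> k0 \<Longrightarrow> l k \<le> eigval A 2"
proof -
  define M where "M = (\<Sum>k\<in>UNIV. {#l k#})"
  have pr: "proots (charpoly A) = M" unfolding cp M_def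
    by (subst proots_prod) auto
  define s where "s = sorted_list_of_multiset M"
  have ms: "mset s = M" unfolding s_def by simp
  have ss: "sorted s" unfolding s_def by simp
  have ls: "length s = CARD('n)"
    using ms size_sum_singletons[of "UNIV::'n set" l] unfolding M_def
    by (metis finite_class.finite_UNIV size_mset)
  have ed: "eigs_desc A = rev s" unfolding eigs_desc_def pr s_def ..
  have inM: "l m \<in> set s" for m
  proof -
    have "l m \<in># M" unfolding M_def by (auto simp: mem_sum_singletons)
    then show ?thesis using ms by (metis set_mset_mset)
  qed
  show "eigval_min A \<le> l k"
  proof -
    have n1: "CARD('n) \<ge> 1" by (simp add: Suc_leI)
    have "eigval_min A = rev s ! (CARD('n) - 1)"
      unfolding eigval_min_def eigval_def ed ..
    also have "... = s ! 0" using n1 ls by (simp add: rev_nth)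
    finally have e: "eigval_min A = s ! 0" .
    obtain j where j: "j < length s" "s ! j = l k" using inM[of k] by (metis in_set_conv_nth)
    show ?thesis unfolding e using sorted_nth_mono[OF ss, of 0 j] j by simp
  qed
  assume le: "\<And>m. l m \<le> l k0" and kk: "k \<noteq> k0"
  have sd: "sorted_wrt (\<ge>) (rev s)" using ss by (simp add: sorted_wrt_rev)
  have "rev s \<noteq> []" using inM[of k] by auto
  then obtain y ys where yys: "rev s = y # ys" by (cases "rev s") auto
  have e2: "eigval A 2 = ys ! 0" unfolding eigval_def ed yys by simp
  have ysd: "sorted_wrt (\<ge>) ys" and yge: "\<forall>z\<in>set ys. z \<le> y" using sd yys by auto
  have top: "z \<le> ys ! 0" if zin: "z \<in> set ys" for z
  proof -
    obtain y' ys' where "ys = y' # ys'" using zin by (cases ys) auto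
    then show ?thesis using zin ysd by auto
  qed
  have Mys: "M = {#y#} + mset ys" using ms yys by (metis mset.simps(2) mset_rev add_mset_add_single union_commute)
  show "l k \<le> eigval A 2"
  proof (cases "l k \<in> set ys")
    case True then show ?thesis using top e2 by simp
  next
    case False
    then have yk: "y = l k" using inM[of k] yys by (metis set_rev set_ConsD)
    have "M = {#l k#} + (\<Sum>m\<in>UNIV - {k}. {#l m#})"
      unfolding M_def by (subst sum.remove[of _ k]) auto
    then have "mset ys = (\<Sum>m\<in>UNIV - {k}. {#l m#})" using Mys yk by simp
    moreover have "l k0 \<in># (\<Sum>m\<in>UNIV - {k}. {#l m#})" using kk by (auto simp: mem_sum_singletons)
    ultimately have "l k0 \<in> set ys" by (metis set_mset_mset)
    then show ?thesis using top e2 le[of k] by fastforce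
  qed
qed

lemma inner_sums:
  fixes u v :: "'i \<Rightarrow> 'v::real_inner"
  shows "(\<Sum>i\<in>A. a i *\<^sub>R u i) \<bullet> (\<Sum>j\<in>B. b j *\<^sub>R v j) = (\<Sum>i\<in>A. \<Sum>j\<in>B. a i * b j * (u i \<bullet> v j))"
proof -
  have "(\<Sum>i\<in>A. a i *\<^sub>R u i) \<bullet> (\<Sum>j\<in>B. b j *\<^sub>R v j) = (\<Sum>i\<in>A. (a i *\<^sub>R u i) \<bullet> (\<Sum>j\<in>B. b j *\<^sub>R v j))"
    by (rule inner_sum_left)
  also have "... = (\<Sum>i\<in>A. \<Sum>j\<in>B. a i * b j * (u i \<bullet> v j))"
    by (rule sum.cong[OF refl]) (simp add: inner_sum_right mult.assoc mult.left_commute)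
  finally show ?thesis .
qed

lemma sum_delta_mult: fixes k :: "'n::finite" shows "(\<Sum>k'\<in>UNIV. (if k = k' then 1 else 0) * f k') = (f k :: real)"
proof -
  have "(\<Sum>k'\<in>UNIV. (if k = k' then 1 else 0) * f k') = (\<Sum>k'\<in>UNIV. if k = k' then f k' else 0)"
    by (rule sum.cong) auto
  also have "... = f k" by simp
  finally show ?thesis .
qed

lemma quad_form:
  fixes u :: "'n::finite \<Rightarrow> 'v::real_inner" and Q :: "real^'n^'n"
  shows "(\<Sum>i\<in>UNIV. \<Sum>j\<in>UNIV. (\<Sum>k\<in>UNIV. Q$i$k * m k * Q$j$k) * (u i \<bullet> u j)) =
         (\<Sum>k\<in>UNIV. m k * (norm (\<Sum>i\<in>UNIV. Q$i$k *\<^sub>R u i))^2)"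
proof -
  have "(norm (\<Sum>i\<in>UNIV. Q$i$k *\<^sub>R u i))^2 = (\<Sum>i\<in>UNIV. \<Sum>j\<in>UNIV. Q$i$k * Q$j$k * (u i \<bullet> u j))" for k
    by (simp only: power2_norm_eq_inner inner_sums)
  then have "(\<Sum>k\<in>UNIV. m k * (norm (\<Sum>i\<in>UNIV. Q$i$k *\<^sub>R u i))^2) =
     (\<Sum>k\<in>UNIV. \<Sum>i\<in>UNIV. \<Sum>j\<in>UNIV. Q$i$k * m k * Q$j$k * (u i \<bullet> u j))"
    by (simp add: sum_distrib_left algebra_simps)
  also have "... = (\<Sum>i\<in>UNIV. \<Sum>k\<in>UNIV. \<Sum>j\<in>UNIV. Q$i$k * m k * Q$j$k * (u i \<bullet> u j))"
    by (rule sum.swap)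
  also have "... = (\<Sum>i\<in>UNIV. \<Sum>j\<in>UNIV. \<Sum>k\<in>UNIV. Q$i$k * m k * Q$j$k * (u i \<bullet> u j))"
    by (rule sum.cong[OF refl], rule sum.swap)
  also have "... = (\<Sum>i\<in>UNIV. \<Sum>j\<in>UNIV. (\<Sum>k\<in>UNIV. Q$i$k * m k * Q$j$k) * (u i \<bullet> u j))"
    by (simp add: sum_distrib_right)
  finally show ?thesis by simp
qed

lemma lin_comb:
  fixes u :: "'n::finite \<Rightarrow> 'v::real_vector" and Q :: "real^'n^'n"
  shows "(\<Sum>j\<in>UNIV. (\<Sum>k\<in>UNIV. Q$i$k * m k * Q$j$k) *\<^sub>R u j) =
         (\<Sum>k\<in>UNIV. (Q$i$k * m k) *\<^sub>R (\<Sum>j\<in>UNIV. Q$j$k *\<^sub>R u j))"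
proof -
  have "(\<Sum>j\<in>UNIV. (\<Sum>k\<in>UNIV. Q$i$k * m k * Q$j$k) *\<^sub>R u j) =
        (\<Sum>j\<in>UNIV. \<Sum>k\<in>UNIV. (Q$i$k * m k) *\<^sub>R (Q$j$k *\<^sub>R u j))"
    by (simp add: scaleR_sum_left)
  also have "... = (\<Sum>k\<in>UNIV. \<Sum>j\<in>UNIV. (Q$i$k * m k) *\<^sub>R (Q$j$k *\<^sub>R u j))"
    by (rule sum.swap)
  also have "... = (\<Sum>k\<in>UNIV. (Q$i$k * m k) *\<^sub>R (\<Sum>j\<in>UNIV. Q$j$k *\<^sub>R u j))"
    by (simp add: scaleR_sum_right)
  finally show ?thesis .
qed

lemma norm_orth:
  fixes d :: "'n::finite \<Rightarrow> 'v::real_inner" and Q :: "real^'n^'n"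
  assumes QtQ: "transpose Q ** Q = mat 1"
  shows "(\<Sum>i\<in>UNIV. (norm (\<Sum>k\<in>UNIV. Q$i$k *\<^sub>R d k))^2) = (\<Sum>k\<in>UNIV. (norm (d k))^2)"
proof -
  have QQ: "(\<Sum>i\<in>UNIV. Q$i$k * Q$i$k') = (if k = k' then 1 else 0)" for k k'
  proof -
    have "(\<Sum>i\<in>UNIV. Q$i$k * Q$i$k') = (transpose Q ** Q)$k$k'"
      by (simp add: matrix_matrix_mult_def transpose_def)
    then show ?thesis using QtQ by (simp add: mat_def)
  qed
  have "(\<Sum>i\<in>UNIV. (norm (\<Sum>k\<in>UNIV. Q$i$k *\<^sub>R d k))^2) =
        (\<Sum>i\<in>UNIV. \<Sum>k\<in>UNIV. \<Sum>k'\<in>UNIV. Q$i$k * Q$i$k' * (d k \<bullet> d k'))"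
    by (simp only: power2_norm_eq_inner inner_sums)
  also have "... = (\<Sum>k\<in>UNIV. \<Sum>i\<in>UNIV. \<Sum>k'\<in>UNIV. Q$i$k * Q$i$k' * (d k \<bullet> d k'))"
    by (rule sum.swap)
  also have "... = (\<Sum>k\<in>UNIV. \<Sum>k'\<in>UNIV. \<Sum>i\<in>UNIV. Q$i$k * Q$i$k' * (d k \<bullet> d k'))"
    by (rule sum.cong[OF refl], rule sum.swap)
  also have "... = (\<Sum>k\<in>UNIV. \<Sum>k'\<in>UNIV. (if k = k' then 1 else 0) * (d k \<bullet> d k'))"
    by (simp add: sum_distrib_right[symmetric] QQ del: mult_1 mult_zero_left)
  also have "... = (\<Sum>k\<in>UNIV. (norm (d k))^2)"
    by (simp only: sum_delta_mult power2_norm_eq_inner)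
  finally show ?thesis .
qed


lemma spec_bounds:
  fixes A :: "real^'n^'n" and u :: "'n \<Rightarrow> 'v::real_inner"
  assumes sym: "transpose A = A" and nonneg: "\<And>i j. A$i$j \<ge> 0"
    and rows: "\<And>i. (\<Sum>j\<in>UNIV. A$i$j) = 1"
  shows "(\<Sum>i\<in>UNIV. u i) = 0 \<Longrightarrow>
           (1 - eigval A 2) * (\<Sum>i\<in>UNIV. (norm (u i))^2) \<le> (\<Sum>i\<in>UNIV. u i \<bullet> (u i - (\<Sum>j\<in>UNIV. A$i$j *\<^sub>R u j)))"
    and "(\<Sum>i\<in>UNIV. (norm (u i - (\<Sum>j\<in>UNIV. A$i$j *\<^sub>R u j)))^2) \<le>
           (1 - eigval_min A) * (\<Sum>i\<in>UNIV. u i \<bullet> (u i - (\<Sum>j\<in>UNIV. A$i$j *\<^sub>R u j)))"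
proof -
  define n where "n = real CARD('n)"
  have n0: "n > 0" unfolding n_def by simp
  define e0 :: "real^'n" where "e0 = (\<chi> i. 1 / sqrt n)"
  have ne0: "norm e0 = 1"
  proof -
    have "e0 \<bullet> e0 = (\<Sum>i\<in>(UNIV::'n set). (1 / sqrt n) * (1 / sqrt n))"
      unfolding e0_def by (simp add: inner_vec_def)
    also have "... = n * ((1 / sqrt n) * (1 / sqrt n))" by (simp add: n_def)
    also have "... = 1" using n0 by simp
    finally show ?thesis by (simp add: norm_eq_sqrt_inner)
  qed
  have Ae0: "A *v e0 = 1 *\<^sub>R e0"
    by (simp add: vec_eq_iff e0_def matrix_vector_mult_def sum_divide_distrib[symmetric] rows)
  obtain Q :: "real^'n^'n" and l k0 where QtQ: "transpose Q ** Q = mat 1" and QQt: "Q ** transpose Q = mat 1"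
    and dec: "\<forall>i j. A$i$j = (\<Sum>k\<in>UNIV. Q$i$k * l k * Q$j$k)" and Qk0: "\<forall>i. Q$i$k0 = e0$i"
    and lk0: "l k0 = 1"
    using spectral[OF sym ne0 Ae0] by blast
  have cp: "charpoly A = (\<Prod>k\<in>UNIV. [:- l k, 1:])"
    by (rule charpoly_dec[OF QQt]) (use dec in blast)
  have QQ: "(\<Sum>k\<in>UNIV. Q$i$k * Q$j$k) = (if i = j then 1 else 0)" for i j
  proof -
    have "(\<Sum>k\<in>UNIV. Q$i$k * Q$j$k) = (Q ** transpose Q)$i$j"
      by (simp add: matrix_matrix_mult_def transpose_def)
    then show ?thesis using QQt by (simp add: mat_def)
  qed
  have QtQ': "(\<Sum>i\<in>UNIV. Q$i$k * Q$i$k') = (if k = k' then 1 else 0)" for k k'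
  proof -
    have "(\<Sum>i\<in>UNIV. Q$i$k * Q$i$k') = (transpose Q ** Q)$k$k'"
      by (simp add: matrix_matrix_mult_def transpose_def)
    then show ?thesis using QtQ by (simp add: mat_def)
  qed
  have cols: "(\<Sum>i\<in>UNIV. A$i$j) = 1" for j
  proof -
    have "A$i$j = A$j$i" for i using sym by (metis transpose_def vec_lambda_beta)
    then show ?thesis using rows[of j] by simp
  qed
  have lle: "l k \<le> 1" for k
  proof -
    let ?q = "\<lambda>i. Q$i$k"
    have "(\<Sum>i\<in>UNIV. \<Sum>j\<in>UNIV. A$i$j * (?q i * ?q j)) = (\<Sum>m\<in>UNIV. l m * (norm (\<Sum>i\<in>UNIV. Q$i$m *\<^sub>R ?q i))^2)"
      using quad_form[of Q l ?q] dec by simp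
    also have "... = (\<Sum>m\<in>UNIV. l m * (if m = k then 1 else 0))"
      by (rule sum.cong[OF refl]) (simp add: QtQ' mult.commute)
    also have "... = l k" by (simp add: if_distrib[where f="\<lambda>x. _ * x"] cong: if_cong)
    finally have lk: "l k = (\<Sum>i\<in>UNIV. \<Sum>j\<in>UNIV. A$i$j * (?q i * ?q j))" by simp
    have "(\<Sum>i\<in>UNIV. \<Sum>j\<in>UNIV. A$i$j * (?q i * ?q j)) \<le>
          (\<Sum>i\<in>UNIV. \<Sum>j\<in>UNIV. A$i$j * ((?q i)^2 + (?q j)^2) / 2)"
    proof (intro sum_mono)
      fix i j
      have "?q i * ?q j \<le> ((?q i)^2 + (?q j)^2) / 2" using sum_squares_bound[of "?q i" "?q j"] by (simp add: field_simps)
      then show "A$i$j * (?q i * ?q j) \<le> A$i$j * ((?q i)^2 + (?q j)^2) / 2"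
        using nonneg[of i j] by (metis mult_left_mono times_divide_eq_right)
    qed
    also have "... = ((\<Sum>i\<in>UNIV. \<Sum>j\<in>UNIV. A$i$j * (?q i)^2) + (\<Sum>i\<in>UNIV. \<Sum>j\<in>UNIV. A$i$j * (?q j)^2)) / 2"
      by (simp add: sum.distrib sum_divide_distrib distrib_left add_divide_distrib)
    also have "(\<Sum>i\<in>UNIV. \<Sum>j\<in>UNIV. A$i$j * (?q i)^2) = (\<Sum>i\<in>UNIV. (?q i)^2)"
      by (simp add: sum_distrib_right[symmetric] rows)
    also have "(\<Sum>i\<in>UNIV. \<Sum>j\<in>UNIV. A$i$j * (?q j)^2) = (\<Sum>j\<in>UNIV. (?q j)^2)"
      by (subst sum.swap) (simp add: sum_distrib_right[symmetric] cols)
    also have "(\<Sum>i\<in>UNIV. (?q i)^2) = 1" using QtQ'[of k k] by (simp add: power2_eq_square)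
    finally show ?thesis using lk by simp
  qed
  define c where "c k = (\<Sum>i\<in>UNIV. Q$i$k *\<^sub>R u i)" for k
  have Bdec: "(if i = j then 1 else 0) - A$i$j = (\<Sum>k\<in>UNIV. Q$i$k * (1 - l k) * Q$j$k)" for i j
    using QQ[of i j] dec by (simp add: algebra_simps sum_subtractf)
  have Idec: "(if i = j then 1 else 0) = (\<Sum>k\<in>UNIV. Q$i$k * (\<lambda>_. 1) k * Q$j$k)" for i j
    using QQ[of i j] by simp
  have res: "u i - (\<Sum>j\<in>UNIV. A$i$j *\<^sub>R u j) = (\<Sum>j\<in>UNIV. ((if i = j then 1 else 0) - A$i$j) *\<^sub>R u j)" for i
    by (simp add: scaleR_diff_left sum_subtractf if_distrib[where f="\<lambda>x. x *\<^sub>R _"] cong: if_cong)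
  have uexp: "u i = (\<Sum>j\<in>UNIV. (if i = j then 1 else 0) *\<^sub>R u j)" for i
    by (simp add: if_distrib[where f="\<lambda>x. x *\<^sub>R _"] cong: if_cong)
  have normsum: "(\<Sum>i\<in>UNIV. (norm (u i))^2) = (\<Sum>k\<in>UNIV. (norm (c k))^2)"
  proof -
    have "u i = (\<Sum>k\<in>UNIV. Q$i$k *\<^sub>R c k)" for i
      using lin_comb[of Q i "\<lambda>_. 1" u] uexp[of i] Idec c_def by simp
    then show ?thesis using norm_orth[OF QtQ, of c] by simp
  qed
  have qf: "(\<Sum>i\<in>UNIV. u i \<bullet> (u i - (\<Sum>j\<in>UNIV. A$i$j *\<^sub>R u j))) = (\<Sum>k\<in>UNIV. (1 - l k) * (norm (c k))^2)"
  proof -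
    have "(\<Sum>i\<in>UNIV. u i \<bullet> (u i - (\<Sum>j\<in>UNIV. A$i$j *\<^sub>R u j))) =
          (\<Sum>i\<in>UNIV. \<Sum>j\<in>UNIV. ((if i = j then 1 else 0) - A$i$j) * (u i \<bullet> u j))"
      unfolding res by (simp add: inner_sum_right)
    also have "... = (\<Sum>i\<in>UNIV. \<Sum>j\<in>UNIV. (\<Sum>k\<in>UNIV. Q$i$k * (1 - l k) * Q$j$k) * (u i \<bullet> u j))"
      unfolding Bdec ..
    also have "... = (\<Sum>k\<in>UNIV. (1 - l k) * (norm (c k))^2)"
      unfolding quad_form c_def ..
    finally show ?thesis .
  qed
  have rs: "(\<Sum>i\<in>UNIV. (norm (u i - (\<Sum>j\<in>UNIV. A$i$j *\<^sub>R u j)))^2) = (\<Sum>k\<in>UNIV. (1 - l k)^2 * (norm (c k))^2)"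
  proof -
    have "u i - (\<Sum>j\<in>UNIV. A$i$j *\<^sub>R u j) = (\<Sum>k\<in>UNIV. Q$i$k *\<^sub>R ((1 - l k) *\<^sub>R c k))" for i
      unfolding res Bdec lin_comb c_def by (simp add: algebra_simps)
    then have "(\<Sum>i\<in>UNIV. (norm (u i - (\<Sum>j\<in>UNIV. A$i$j *\<^sub>R u j)))^2) = (\<Sum>k\<in>UNIV. (norm ((1 - l k) *\<^sub>R c k))^2)"
      using norm_orth[OF QtQ, of "\<lambda>k. (1 - l k) *\<^sub>R c k"] by simp
    then show ?thesis by (simp add: power_mult_distrib)
  qed
  show "(\<Sum>i\<in>UNIV. u i) = 0 \<Longrightarrow>
           (1 - eigval A 2) * (\<Sum>i\<in>UNIV. (norm (u i))^2) \<le> (\<Sum>i\<in>UNIV. u i \<bullet> (u i - (\<Sum>j\<in>UNIV. A$i$j *\<^sub>R u j)))"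
  proof -
    assume s0: "(\<Sum>i\<in>UNIV. u i) = 0"
    have ck0: "c k0 = 0" unfolding c_def using Qk0
      by (simp add: e0_def scaleR_sum_right[symmetric] s0)
    have "(1 - eigval A 2) * (norm (c k))^2 \<le> (1 - l k) * (norm (c k))^2" for k
    proof (cases "k = k0")
      case True then show ?thesis using ck0 by simp
    next
      case False
      then have "l k \<le> eigval A 2" using eig_facts(2)[OF cp, of k0 k] lle lk0 by simp
      then show ?thesis by (intro mult_right_mono) auto
    qed
    then have "(1 - eigval A 2) * (\<Sum>k\<in>UNIV. (norm (c k))^2) \<le> (\<Sum>k\<in>UNIV. (1 - l k) * (norm (c k))^2)"
      by (simp add: sum_distrib_left sum_mono)
    then show ?thesis using normsum qf by simp
  qed
  show "(\<Sum>i\<in>UNIV. (norm (u i - (\<Sum>j\<in>UNIV. A$i$j *\<^sub>R u j)))^2) \<le>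
           (1 - eigval_min A) * (\<Sum>i\<in>UNIV. u i \<bullet> (u i - (\<Sum>j\<in>UNIV. A$i$j *\<^sub>R u j)))"
  proof -
    have "(1 - l k)^2 * (norm (c k))^2 \<le> (1 - eigval_min A) * ((1 - l k) * (norm (c k))^2)" for k
    proof -
      have a: "0 \<le> 1 - l k" using lle[of k] by simp
      have b: "1 - l k \<le> 1 - eigval_min A" using eig_facts(1)[OF cp, of k] by simp
      have "(1 - l k) * (1 - l k) \<le> (1 - eigval_min A) * (1 - l k)" by (rule mult_right_mono[OF b a])
      then have "(1 - l k) * (1 - l k) * (norm (c k))^2 \<le> (1 - eigval_min A) * (1 - l k) * (norm (c k))^2" by (rule mult_right_mono) simp
      then show ?thesis by (simp add: power2_eq_square mult.assoc)
    qed
    then have "(\<Sum>k\<in>UNIV. (1 - l k)^2 * (norm (c k))^2) \<le> (1 - eigval_min A) * (\<Sum>k\<in>UNIV. (1 - l k) * (norm (c k))^2)"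
      by (simp add: sum_distrib_left sum_mono)
    then show ?thesis using rs qf by simp
  qed
qed



lemma mm_entry: "(A ** B)$i$j = (\<Sum>k\<in>UNIV. A$i$k * B$k$j)"
  by (simp add: matrix_matrix_mult_def)

lemma tr_entry: "transpose A $i$j = A$j$i"
  by (simp add: transpose_def)

lemma inner_mat: "(X::real^'c^'r) \<bullet> Y = (\<Sum>i\<in>UNIV. \<Sum>j\<in>UNIV. X$i$j * Y$i$j)"
  by (simp add: inner_vec_def)

lemma matrix_sub_ldistrib: "(A::real^'n^'m) ** (B - C) = A ** B - A ** C"
  by (simp add: vec_eq_iff matrix_matrix_mult_def sum_subtractf algebra_simps)

lemma matrix_sub_rdistrib: "((B::real^'n^'m) - C) ** A = B ** A - C ** A"
  by (simp add: vec_eq_iff matrix_matrix_mult_def sum_subtractf algebra_simps)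

lemma matrix_add_rdistrib': "((B::real^'n^'m) + C) ** A = B ** A + C ** A"
  by (simp add: vec_eq_iff matrix_matrix_mult_def sum.distrib algebra_simps)

lemma transpose_diff: "transpose ((A::real^'n^'m) - B) = transpose A - transpose B"
  by (simp add: vec_eq_iff transpose_def)

lemma transpose_add: "transpose ((A::real^'n^'m) + B) = transpose A + transpose B"
  by (simp add: vec_eq_iff transpose_def)

lemma mm_scaleR_right: "(A::real^'n^'m) ** (c *\<^sub>R B) = c *\<^sub>R (A ** B)"
  by (simp add: vec_eq_iff matrix_matrix_mult_def sum_distrib_left algebra_simps)

lemma mm_scaleR_left: "(c *\<^sub>R (A::real^'n^'m)) ** B = c *\<^sub>R (A ** B)"
  by (simp add: vec_eq_iff matrix_matrix_mult_def sum_distrib_left algebra_simps)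

lemma inner_mult_left:
  fixes X :: "real^'c^'a" and Y :: "real^'b^'a" and Z :: "real^'c^'b"
  shows "X \<bullet> (Y ** Z) = (transpose Y ** X) \<bullet> Z"
proof -
  have "X \<bullet> (Y ** Z) = (\<Sum>a\<in>UNIV. \<Sum>c\<in>UNIV. \<Sum>b\<in>UNIV. X$a$c * (Y$a$b * Z$b$c))"
    by (simp add: inner_mat mm_entry sum_distrib_left)
  also have "... = (\<Sum>a\<in>UNIV. \<Sum>b\<in>UNIV. \<Sum>c\<in>UNIV. X$a$c * (Y$a$b * Z$b$c))"
    by (rule sum.cong[OF refl], rule sum.swap)
  also have "... = (\<Sum>b\<in>UNIV. \<Sum>a\<in>UNIV. \<Sum>c\<in>UNIV. X$a$c * (Y$a$b * Z$b$c))"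
    by (rule sum.swap)
  also have "... = (\<Sum>b\<in>UNIV. \<Sum>c\<in>UNIV. \<Sum>a\<in>UNIV. X$a$c * (Y$a$b * Z$b$c))"
    by (rule sum.cong[OF refl], rule sum.swap)
  also have "... = (\<Sum>b\<in>UNIV. \<Sum>c\<in>UNIV. \<Sum>a\<in>UNIV. Y$a$b * X$a$c * Z$b$c)"
    by (intro sum.cong refl) (simp add: mult_ac)
  also have "... = (transpose Y ** X) \<bullet> Z"
    by (simp add: inner_mat mm_entry tr_entry sum_distrib_right)
  finally show ?thesis .
qed

lemma inner_transpose: "transpose (X::real^'c^'r) \<bullet> transpose Y = X \<bullet> Y"
  by (simp add: inner_mat tr_entry) (rule sum.swap)

lemma inner_sym_tr: "transpose K = K \<Longrightarrow> transpose M \<bullet> (K::real^'c^'c) = M \<bullet> K"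
  by (metis inner_transpose)

lemma sym_half: "transpose K = K \<Longrightarrow> M \<bullet> (K::real^'c^'c) = (1/2) * ((M + transpose M) \<bullet> K)"
  using inner_sym_tr[of K M] by (simp add: inner_add_left)

lemma norm_transpose: "norm (transpose (X::real^'c^'r)) = norm X"
  by (simp add: norm_eq_sqrt_inner inner_transpose)

lemma norm_sq_rows: "(norm (X::real^'c^'r))^2 = (\<Sum>a\<in>UNIV. (norm (X$a))^2)"
  by (simp add: power2_norm_eq_inner inner_vec_def)

lemma norm_mult_le: "norm ((X::real^'b^'a) ** (Y::real^'c^'b)) \<le> norm X * norm Y"
proof -
  have e: "(X ** Y)$a$c = X$a \<bullet> transpose Y $ c" for a c
    by (simp add: mm_entry tr_entry inner_vec_def)
  have "(norm (X ** Y))^2 = (\<Sum>a\<in>UNIV. \<Sum>c\<in>UNIV. ((X ** Y)$a$c)^2)"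
    unfolding power2_norm_eq_inner inner_mat by (simp add: power2_eq_square)
  also have "... \<le> (\<Sum>a\<in>UNIV. \<Sum>c\<in>UNIV. (norm (X$a))^2 * (norm (transpose Y $ c))^2)"
  proof (intro sum_mono)
    fix a c
    have "\<bar>X$a \<bullet> transpose Y $ c\<bar> \<le> norm (X$a) * norm (transpose Y $ c)" by (rule Cauchy_Schwarz_ineq2)
    then have "(X$a \<bullet> transpose Y $ c)^2 \<le> (norm (X$a) * norm (transpose Y $ c))^2"
    proof -
      have "\<bar>X$a \<bullet> transpose Y $ c\<bar>^2 \<le> (norm (X$a) * norm (transpose Y $ c))^2"
        by (rule power_mono[OF \<open>\<bar>X$a \<bullet> transpose Y $ c\<bar> \<le> _\<close> abs_ge_zero])
      then show ?thesis by (simp only: power2_abs)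
    qed
    then show "((X ** Y)$a$c)^2 \<le> (norm (X$a))^2 * (norm (transpose Y $ c))^2"
      unfolding e by (simp add: power_mult_distrib)
  qed
  also have "... = (\<Sum>a\<in>UNIV. (norm (X$a))^2) * (\<Sum>c\<in>UNIV. (norm (transpose Y $ c))^2)"
    by (rule sum_product[symmetric])
  also have "... = (norm X * norm Y)^2"
    by (simp only: norm_sq_rows[symmetric] norm_transpose power_mult_distrib)
  finally show ?thesis by (rule power2_le_imp_le) simp
qed

lemma st_left: "x \<in> stiefel \<Longrightarrow> transpose x ** (x ** K) = K"
  by (simp add: stiefel_def matrix_mul_assoc)

lemma st_norm: "x \<in> stiefel \<Longrightarrow> norm (x ** K) = norm K"
proof -
  assume "x \<in> stiefel"
  then have "(x ** K) \<bullet> (x ** K) = K \<bullet> K" by (simp add: inner_mult_left st_left)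
  then show ?thesis by (simp add: norm_eq_sqrt_inner)
qed

lemma st_M5: "x \<in> stiefel \<Longrightarrow> y \<in> stiefel \<Longrightarrow>
   transpose x ** (x - y) + transpose (x - y) ** x = transpose (x - y) ** (x - y)"
  by (simp add: stiefel_def matrix_sub_ldistrib matrix_sub_rdistrib transpose_diff algebra_simps)

lemma sym_prod: "transpose (transpose (z::real^'c^'r) ** z) = transpose z ** z"
  by (simp add: matrix_transpose_mul)



lemma tr_scaleR_mm: "transpose (c *\<^sub>R ((x::real^'r^'d) ** (S::real^'r^'r))) = c *\<^sub>R (transpose S ** transpose x)"
  by (simp add: transpose_scalar matrix_transpose_mul)

lemma proj_tangent_in:
  assumes x: "x \<in> stiefel"
  shows "proj_tangent x y \<in> tangent x"
proof -
  define S where "S = transpose x ** y + transpose y ** x"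
  have Ss: "transpose S = S" unfolding S_def by (simp add: transpose_add matrix_transpose_mul add.commute)
  have xx: "transpose x ** x = mat 1" using x by (simp add: stiefel_def)
  have p: "proj_tangent x y = y - (1/2) *\<^sub>R (x ** S)" unfolding proj_tangent_def S_def ..
  have "transpose x ** proj_tangent x y = transpose x ** y - (1/2) *\<^sub>R S"
    unfolding p by (simp add: matrix_sub_ldistrib mm_scaleR_right st_left[OF x])
  moreover have "transpose (proj_tangent x y) ** x = transpose y ** x - (1/2) *\<^sub>R S"
    unfolding p by (simp add: transpose_diff tr_scaleR_mm matrix_sub_rdistrib mm_scaleR_left
        matrix_mul_assoc[symmetric] xx Ss)
  ultimately have "transpose x ** proj_tangent x y + transpose (proj_tangent x y) ** x =
      (transpose x ** y - (1/2) *\<^sub>R S) + (transpose y ** x - (1/2) *\<^sub>R S)" by simp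
  also have "... = S - (1/2 + 1/2) *\<^sub>R S" unfolding S_def by (simp add: scaleR_add_left algebra_simps)
  also have "... = 0" by simp
  finally show ?thesis unfolding tangent_def by simp
qed

lemma proj_inner:
  assumes x: "x \<in> stiefel"
  shows "z \<bullet> proj_tangent x e = z \<bullet> e - (1/2) * ((transpose x ** z) \<bullet> (transpose x ** e + transpose e ** x))"
  unfolding proj_tangent_def by (simp add: inner_diff_right inner_mult_left)

lemma proj_norm:
  assumes x: "x \<in> stiefel"
  shows "(norm (proj_tangent x e))^2 \<le> (norm e)^2"
proof -
  define S where "S = transpose x ** e + transpose e ** x"
  have Ss: "transpose S = S" unfolding S_def by (simp add: transpose_add matrix_transpose_mul add.commute)
  have p: "proj_tangent x e = e - (1/2) *\<^sub>R (x ** S)" unfolding proj_tangent_def S_def ..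
  have a: "e \<bullet> (x ** S) = (1/2) * (S \<bullet> S)"
  proof -
    have "e \<bullet> (x ** S) = (transpose x ** e) \<bullet> S" by (simp add: inner_mult_left)
    also have "... = (1/2) * ((transpose x ** e + transpose (transpose x ** e)) \<bullet> S)" by (rule sym_half[OF Ss])
    also have "transpose (transpose x ** e) = transpose e ** x" by (simp add: matrix_transpose_mul)
    finally show ?thesis unfolding S_def .
  qed
  have b: "(x ** S) \<bullet> (x ** S) = S \<bullet> S" using st_norm[OF x, of S] by (simp add: norm_eq_sqrt_inner)
  have "(norm (proj_tangent x e))^2 = e \<bullet> e - e \<bullet> (x ** S) + (1/4) * ((x ** S) \<bullet> (x ** S))"
    unfolding p power2_norm_eq_inner by (simp add: inner_diff_left inner_diff_right inner_commute)
  also have "... = e \<bullet> e - (1/4) * (S \<bullet> S)" using a b by simp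
  also have "... \<le> (norm e)^2" by (simp add: power2_norm_eq_inner)
  finally show ?thesis .
qed

lemma tangent_add: "a \<in> tangent x \<Longrightarrow> b \<in> tangent x \<Longrightarrow> a + b \<in> tangent x"
  unfolding tangent_def by (simp add: matrix_add_ldistrib matrix_add_rdistrib' transpose_add algebra_simps)

lemma tangent_scale: "a \<in> tangent x \<Longrightarrow> c *\<^sub>R a \<in> tangent x"
  unfolding tangent_def by (simp add: mm_scaleR_right mm_scaleR_left transpose_scalar scaleR_add_right[symmetric])

lemma stiefel_sq:
  fixes y :: "real^'r^'d"
  assumes y: "y \<in> stiefel"
  shows "y \<bullet> y = (mat 1 :: real^'r^'r) \<bullet> mat 1"
proof -
  have "y \<bullet> y = y \<bullet> (y ** (mat 1 :: real^'r^'r))" by simp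
  also have "... = (transpose y ** y) \<bullet> mat 1" by (rule inner_mult_left)
  finally show ?thesis using y by (simp add: stiefel_def)
qed

lemma tangent_perp:
  assumes xi: "\<xi> \<in> tangent x" and K: "transpose K = K"
  shows "\<xi> \<bullet> (x ** K) = 0"
proof -
  have "\<xi> \<bullet> (x ** K) = (transpose x ** \<xi>) \<bullet> K" by (rule inner_mult_left)
  also have "... = (1/2) * ((transpose x ** \<xi> + transpose (transpose x ** \<xi>)) \<bullet> K)" by (rule sym_half[OF K])
  also have "transpose x ** \<xi> + transpose (transpose x ** \<xi>) = 0"
    using xi by (simp add: tangent_def matrix_transpose_mul)
  finally show ?thesis by simp
qed

lemma iam_fo:
  fixes x :: "'n::finite \<Rightarrow> real^'r^'d" and R :: "real^'r^'d \<Rightarrow> real^'r^'d \<Rightarrow> real^'r^'d"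
  assumes retr: "is_retraction R" and iam: "is_IAM x xb" and xi: "\<xi> \<in> tangent xb"
  shows "\<xi> \<bullet> (\<Sum>i\<in>UNIV. x i) = 0"
proof -
  define X where "X = (\<Sum>i\<in>UNIV. x i)"
  have xb: "xb \<in> stiefel" using iam by (simp add: is_IAM_def)
  define \<gamma> where "\<gamma> s = R xb (s *\<^sub>R \<xi>)" for s
  have gst: "\<gamma> s \<in> stiefel" for s
    using retr xb tangent_scale[OF xi] unfolding is_retraction_def \<gamma>_def by blast
  have g0: "\<gamma> 0 = xb" using retr xb unfolding is_retraction_def \<gamma>_def by simp
  have gd: "(\<gamma> has_vector_derivative \<xi>) (at 0)"
    using retr xb xi unfolding is_retraction_def \<gamma>_def by blast
  define G where "G s = \<gamma> s \<bullet> X" for s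
  have Gd: "(G has_field_derivative (\<xi> \<bullet> X)) (at 0)"
  proof -
    have "(G has_derivative (\<lambda>h. (h *\<^sub>R \<xi>) \<bullet> X)) (at 0)"
      unfolding G_def using gd unfolding has_vector_derivative_def
      by (rule has_derivative_inner_left)
    moreover have "(\<lambda>h. (h *\<^sub>R \<xi>) \<bullet> X) = (*) (\<xi> \<bullet> X)" by (auto simp: mult.commute)
    ultimately show ?thesis by (simp add: has_field_derivative_def)
  qed
  have Gmax: "G s \<le> G 0" for s
  proof -
    have "(\<Sum>i\<in>UNIV. (norm (xb - x i))\<^sup>2) \<le> (\<Sum>i\<in>UNIV. (norm (\<gamma> s - x i))\<^sup>2)"
      using iam gst unfolding is_IAM_def by blast
    moreover have "(norm (y - x i))\<^sup>2 = (mat 1 :: real^'r^'r) \<bullet> mat 1 - 2 * (y \<bullet> x i) + x i \<bullet> x i"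
      if "y \<in> stiefel" for y i
      using stiefel_sq[OF that] by (simp add: power2_norm_eq_inner inner_diff_left inner_diff_right inner_commute)
    ultimately have "(\<Sum>i\<in>UNIV. (mat 1 :: real^'r^'r) \<bullet> mat 1 - 2 * (xb \<bullet> x i) + x i \<bullet> x i)
       \<le> (\<Sum>i\<in>UNIV. (mat 1 :: real^'r^'r) \<bullet> mat 1 - 2 * (\<gamma> s \<bullet> x i) + x i \<bullet> x i)"
      using xb gst by simp
    then have "(\<Sum>i\<in>UNIV. 2 * (\<gamma> s \<bullet> x i)) \<le> (\<Sum>i\<in>UNIV. 2 * (xb \<bullet> x i))"
      by (simp add: sum.distrib sum_subtractf)
    then have "(\<Sum>i\<in>UNIV. \<gamma> s \<bullet> x i) \<le> (\<Sum>i\<in>UNIV. xb \<bullet> x i)"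
      by (simp add: sum_distrib_left[symmetric])
    then show ?thesis unfolding G_def X_def g0[symmetric] by (simp add: inner_sum_right g0)
  qed
  have "\<xi> \<bullet> X = 0"
    by (rule DERIV_local_max[OF Gd zero_less_one]) (use Gmax in auto)
  then show ?thesis unfolding X_def .
qed

lemma iam_fo2:
  fixes x :: "'n::finite \<Rightarrow> real^'r^'d" and R :: "real^'r^'d \<Rightarrow> real^'r^'d \<Rightarrow> real^'r^'d"
  assumes retr: "is_retraction R" and iam: "is_IAM x xb" and xi: "\<xi> \<in> tangent xb"
  shows "\<xi> \<bullet> (\<Sum>i\<in>UNIV. x i - xb) = 0"
proof -
  have "\<xi> \<bullet> xb = 0" using tangent_perp[OF xi, of "mat 1"] by simp
  then show ?thesis using iam_fo[OF assms] by (simp add: inner_sum_right inner_diff_right)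
qed

lemma mm_sum_right: "finite I \<Longrightarrow> (A::real^'n^'m) ** (\<Sum>i\<in>I. B i) = (\<Sum>i\<in>I. A ** B i)"
  by (induction I rule: finite_induct) (auto simp: matrix_add_ldistrib)

lemma mm_sum_left: "finite I \<Longrightarrow> (\<Sum>i\<in>I. B i) ** (A::real^'n^'m) = (\<Sum>i\<in>I. B i ** A)"
  by (induction I rule: finite_induct) (auto simp: matrix_add_rdistrib')

lemma transpose_zero: "transpose (0::real^'n^'m) = 0"
  by (simp add: vec_eq_iff transpose_def)

lemma transpose_sum: "finite I \<Longrightarrow> transpose (\<Sum>i\<in>I. (B i :: real^'n^'m)) = (\<Sum>i\<in>I. transpose (B i))"
  by (induction I rule: finite_induct) (auto simp: transpose_add transpose_zero)

lemma mbound: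
  fixes x :: "'n::finite \<Rightarrow> real^'r^'d"
  assumes xSt: "\<And>i. x i \<in> stiefel" and xb: "xb \<in> stiefel"
    and fo: "\<And>\<xi>. \<xi> \<in> tangent xb \<Longrightarrow> \<xi> \<bullet> (\<Sum>i\<in>UNIV. x i - xb) = 0"
  shows "norm (\<Sum>i\<in>UNIV. x i - xb) \<le> (1/2) * (\<Sum>i\<in>UNIV. (norm (x i - xb))^2)"
proof -
  define s where "s = (\<Sum>i\<in>UNIV. x i - xb)"
  define S where "S = transpose xb ** s + transpose s ** xb"
  have Ss: "transpose S = S" unfolding S_def by (simp add: transpose_add matrix_transpose_mul add.commute)
  define P where "P = proj_tangent xb s"
  have PT: "P \<in> tangent xb" unfolding P_def by (rule proj_tangent_in[OF xb])
  have p: "P = s - (1/2) *\<^sub>R (xb ** S)" unfolding P_def proj_tangent_def S_def ..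
  have "P \<bullet> P = P \<bullet> s - (1/2) * (P \<bullet> (xb ** S))"
    by (subst (2) p) (simp add: inner_diff_right)
  also have "P \<bullet> s = 0" using fo[OF PT] unfolding s_def .
  also have "P \<bullet> (xb ** S) = 0" by (rule tangent_perp[OF PT Ss])
  finally have "P = 0" by simp
  then have sS: "s = (1/2) *\<^sub>R (xb ** S)" using p by simp
  have trm: "transpose xb ** (x i - xb) + transpose (x i - xb) ** xb = - (transpose (x i - xb) ** (x i - xb))" for i
  proof -
    have "transpose xb ** (xb - x i) + transpose (xb - x i) ** xb = transpose (xb - x i) ** (xb - x i)"
      by (rule st_M5[OF xb xSt])
    then show ?thesis
      by (simp add: matrix_sub_ldistrib matrix_sub_rdistrib transpose_diff algebra_simps)
  qed
  have SS: "S = - (\<Sum>i\<in>UNIV. transpose (x i - xb) ** (x i - xb))"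
    unfolding S_def s_def by (simp add: mm_sum_right mm_sum_left transpose_sum trm sum.distrib[symmetric] sum_negf)
  have "norm s = (1/2) * norm S" unfolding sS by (simp add: st_norm[OF xb])
  also have "norm S \<le> (\<Sum>i\<in>UNIV. norm (transpose (x i - xb) ** (x i - xb)))"
    unfolding SS norm_minus_cancel by (rule norm_sum)
  also have "... \<le> (\<Sum>i\<in>UNIV. (norm (x i - xb))^2)"
    by (rule sum_mono) (metis norm_mult_le norm_transpose power2_eq_square)
  finally show ?thesis unfolding s_def by simp
qed

lemma cs_mat: "(transpose (w::real^'r^'d) ** w) \<bullet> (transpose z ** z) \<le> (norm w)^2 * (norm z)^2"
proof -
  have "(transpose w ** w) \<bullet> (transpose z ** z) \<le> norm (transpose w ** w) * norm (transpose z ** z)"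
    by (rule norm_cauchy_schwarz)
  also have "... \<le> (norm w)^2 * (norm z)^2"
    by (intro mult_mono) (auto simp: power2_eq_square intro: order.trans[OF norm_mult_le] simp: norm_transpose)
  finally show ?thesis .
qed

lemma zg_bound:
  fixes x :: "'n::finite \<Rightarrow> real^'r^'d" and A :: "real^'n^'n"
  assumes xSt: "\<And>i. x i \<in> stiefel" and xb: "xb \<in> stiefel"
    and rows: "\<And>i. (\<Sum>j\<in>UNIV. A$i$j) = 1" and nonneg: "\<And>i j. A$i$j \<ge> 0"
    and N2: "norm (x i - xb) \<le> \<delta>2"
  shows "(x i - xb) \<bullet> proj_tangent (x i) (x i - (\<Sum>j\<in>UNIV. A$i$j *\<^sub>R x j)) \<ge>
         (x i - xb) \<bullet> (x i - (\<Sum>j\<in>UNIV. A$i$j *\<^sub>R x j)) - (\<delta>2^2 / 4) * (\<Sum>j\<in>UNIV. A$i$j * (norm (x i - x j))^2)"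
proof -
  define z where "z = x i - xb"
  define e where "e = x i - (\<Sum>j\<in>UNIV. A$i$j *\<^sub>R x j)"
  define S where "S = transpose (x i) ** e + transpose e ** x i"
  define K where "K = transpose z ** z"
  have Ss: "transpose S = S" unfolding S_def by (simp add: transpose_add matrix_transpose_mul add.commute)
  have Ks: "transpose K = K" unfolding K_def by (rule sym_prod)
  have e_alt: "e = (\<Sum>j\<in>UNIV. A$i$j *\<^sub>R (x i - x j))"
  proof -
    have "(\<Sum>j\<in>UNIV. A$i$j *\<^sub>R x i) = x i" using rows[of i] by (simp add: scaleR_sum_left[symmetric])
    then show ?thesis unfolding e_def by (simp add: scaleR_diff_right sum_subtractf)
  qed
  have zg: "z \<bullet> proj_tangent (x i) e = z \<bullet> e - (1/2) * ((transpose (x i) ** z) \<bullet> S)"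
    unfolding S_def by (rule proj_inner[OF xSt])
  have a: "(transpose (x i) ** z) \<bullet> S = (1/2) * (K \<bullet> S)"
  proof -
    have "(transpose (x i) ** z) \<bullet> S = (1/2) * ((transpose (x i) ** z + transpose (transpose (x i) ** z)) \<bullet> S)"
      by (rule sym_half[OF Ss])
    also have "transpose (transpose (x i) ** z) = transpose z ** x i" by (simp add: matrix_transpose_mul)
    also have "transpose (x i) ** z + transpose z ** x i = K"
      unfolding K_def z_def by (rule st_M5[OF xSt xb])
    finally show ?thesis .
  qed
  have b: "K \<bullet> S = 2 * (K \<bullet> (transpose (x i) ** e))"
  proof -
    have "K \<bullet> (transpose e ** x i) = transpose K \<bullet> transpose (transpose e ** x i)"
      by (simp add: inner_transpose)
    also have "... = K \<bullet> (transpose (x i) ** e)" using Ks by (simp add: matrix_transpose_mul)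
    finally show ?thesis unfolding S_def by (simp add: inner_add_right)
  qed
  have c: "K \<bullet> (transpose (x i) ** e) = (x i ** K) \<bullet> e"
    using inner_mult_left[of K "transpose (x i)" e] by simp
  have d: "(x i ** K) \<bullet> (x i - x j) = (1/2) * ((transpose (x i - x j) ** (x i - x j)) \<bullet> K)" for j
  proof -
    have "(x i ** K) \<bullet> (x i - x j) = (transpose (x i) ** (x i - x j)) \<bullet> K"
      using inner_mult_left[of "x i - x j" "x i" K] by (simp add: inner_commute)
    also have "... = (1/2) * ((transpose (x i) ** (x i - x j) + transpose (transpose (x i) ** (x i - x j))) \<bullet> K)"
      by (rule sym_half[OF Ks])
    also have "transpose (x i) ** (x i - x j) + transpose (transpose (x i) ** (x i - x j)) =
        transpose (x i - x j) ** (x i - x j)"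
      using st_M5[OF xSt xSt, of i j] by (simp add: matrix_transpose_mul)
    finally show ?thesis .
  qed
  have KS: "K \<bullet> S = (\<Sum>j\<in>UNIV. A$i$j * ((transpose (x i - x j) ** (x i - x j)) \<bullet> K))"
    unfolding b c unfolding e_alt by (simp add: inner_sum_right d sum_distrib_left)
  have zz: "(norm z)^2 \<le> \<delta>2^2" using N2 unfolding z_def by (simp add: power_mono)
  have "K \<bullet> S \<le> (\<Sum>j\<in>UNIV. A$i$j * ((norm (x i - x j))^2 * \<delta>2^2))"
    unfolding KS
  proof (rule sum_mono, rule mult_left_mono[OF _ nonneg])
    fix j
    have "(transpose (x i - x j) ** (x i - x j)) \<bullet> K \<le> (norm (x i - x j))^2 * (norm z)^2"
      unfolding K_def by (rule cs_mat)
    also have "... \<le> (norm (x i - x j))^2 * \<delta>2^2" by (rule mult_left_mono[OF zz]) simp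
    finally show "(transpose (x i - x j) ** (x i - x j)) \<bullet> K \<le> (norm (x i - x j))^2 * \<delta>2^2" .
  qed
  then have "K \<bullet> S \<le> \<delta>2^2 * (\<Sum>j\<in>UNIV. A$i$j * (norm (x i - x j))^2)"
    by (simp add: sum_distrib_left mult_ac)
  then show ?thesis using zg a unfolding z_def[symmetric] e_def[symmetric] by simp
qed

lemma core:
  fixes x :: "'n::finite \<Rightarrow> real^'r^'d" and A :: "real^'n^'n"
  assumes xSt: "\<And>i. x i \<in> stiefel" and xb: "xb \<in> stiefel"
    and sym: "transpose A = A" and nonneg: "\<And>i j. A$i$j \<ge> 0"
    and rows: "\<And>i. (\<Sum>j\<in>UNIV. A$i$j) = 1"
    and mb: "norm (\<Sum>i\<in>UNIV. x i - xb) \<le> (1/2) * (\<Sum>i\<in>UNIV. (norm (x i - xb))^2)"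
    and N1: "(\<Sum>i\<in>UNIV. (norm (x i - xb))^2) \<le> real CARD('n) * \<delta>1^2"
    and N2: "\<And>i. norm (x i - xb) \<le> \<delta>2"
    and d1: "4 * real CARD('r) * \<delta>1^2 \<le> 1" and d2: "\<delta>2^2 \<le> 1"
    and alpha: "0 < \<alpha>" "\<alpha> \<le> (2 - \<delta>2^2) / (2 * (1 - eigval_min A))"
  shows "(\<Sum>i\<in>UNIV. (norm (x i - \<alpha> *\<^sub>R proj_tangent (x i) (x i - (\<Sum>j\<in>UNIV. A$i$j *\<^sub>R x j)) - xb))^2)
    \<le> (1 - (1 - 4 * real CARD('r) * \<delta>1^2) * (1 - \<delta>2^2/2) * (1 - eigval A 2) * \<alpha>) * (\<Sum>i\<in>UNIV. (norm (x i - xb))^2)"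
proof -
  define n where "n = real CARD('n)"
  have n0: "n > 0" unfolding n_def by simp
  define z where "z i = x i - xb" for i
  define e where "e i = x i - (\<Sum>j\<in>UNIV. A$i$j *\<^sub>R x j)" for i
  define g where "g i = proj_tangent (x i) (e i)" for i
  define Sz where "Sz = (\<Sum>i\<in>UNIV. (norm (z i))^2)"
  define Q where "Q = (\<Sum>i\<in>UNIV. z i \<bullet> e i)"
  define L where "L = 1 - eigval_min A"
  define \<mu> where "\<mu> = 1 - eigval A 2"
  have cols: "(\<Sum>i\<in>UNIV. A$i$j) = 1" for j
  proof -
    have "A$i$j = A$j$i" for i using sym by (metis transpose_def vec_lambda_beta)
    then show ?thesis using rows[of j] by simp
  qed
  have e_z: "e i = z i - (\<Sum>j\<in>UNIV. A$i$j *\<^sub>R z j)" for i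
  proof -
    have "(\<Sum>j\<in>UNIV. A$i$j *\<^sub>R xb) = xb" using rows[of i] by (simp add: scaleR_sum_left[symmetric])
    then show ?thesis unfolding e_def z_def by (simp add: scaleR_diff_right sum_subtractf)
  qed
  have Q2: "(\<Sum>i\<in>UNIV. (norm (e i))^2) \<le> L * Q"
    using spec_bounds(2)[OF sym nonneg rows, of z] unfolding L_def Q_def e_z by simp
  have L0: "L > 0"
  proof (rule ccontr)
    assume "\<not> L > 0"
    then have "2 * L \<le> 0" by simp
    then have "(2 - \<delta>2^2) / (2 * L) \<le> 0" using d2 by (intro divide_nonneg_nonpos) auto
    then show False using alpha unfolding L_def by simp
  qed
  have Q0: "Q \<ge> 0"
  proof -
    have "0 \<le> (\<Sum>i\<in>UNIV. (norm (e i))^2)" by (simp add: sum_nonneg)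
    then have "0 \<le> L * Q" using Q2 by simp
    then show ?thesis using L0 by (simp add: zero_le_mult_iff)
  qed
  have aL: "\<alpha> * L \<le> 1 - \<delta>2^2/2"
  proof -
    have "\<alpha> \<le> (2 - \<delta>2^2) / (2 * L)" using alpha unfolding L_def by simp
    then have "\<alpha> * (2 * L) \<le> 2 - \<delta>2^2" using L0 by (simp add: pos_le_divide_eq)
    then show ?thesis by simp
  qed
  have pw: "(\<Sum>i\<in>UNIV. \<Sum>j\<in>UNIV. A$i$j * (norm (x i - x j))^2) = 2 * Q"
  proof -
    have xx: "x i - x j = z i - z j" for i j unfolding z_def by simp
    have "(\<Sum>i\<in>UNIV. \<Sum>j\<in>UNIV. A$i$j * (norm (x i - x j))^2) =
      (\<Sum>i\<in>UNIV. \<Sum>j\<in>UNIV. A$i$j * (z i \<bullet> z i)) - 2 * (\<Sum>i\<in>UNIV. \<Sum>j\<in>UNIV. A$i$j * (z i \<bullet> z j))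
        + (\<Sum>i\<in>UNIV. \<Sum>j\<in>UNIV. A$i$j * (z j \<bullet> z j))"
      unfolding xx by (simp add: power2_norm_eq_inner inner_diff_left inner_diff_right inner_commute
          algebra_simps sum.distrib sum_subtractf sum_distrib_left)
    also have "(\<Sum>i\<in>UNIV. \<Sum>j\<in>UNIV. A$i$j * (z i \<bullet> z i)) = Sz"
      unfolding Sz_def by (simp add: sum_distrib_right[symmetric] rows power2_norm_eq_inner)
    also have "(\<Sum>i\<in>UNIV. \<Sum>j\<in>UNIV. A$i$j * (z j \<bullet> z j)) = Sz"
      unfolding Sz_def by (subst sum.swap) (simp add: sum_distrib_right[symmetric] cols power2_norm_eq_inner)
    also have "(\<Sum>i\<in>UNIV. \<Sum>j\<in>UNIV. A$i$j * (z i \<bullet> z j)) = Sz - Q"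
      unfolding Sz_def Q_def e_z by (simp add: inner_diff_right inner_sum_right sum_subtractf power2_norm_eq_inner)
    finally show ?thesis by simp
  qed
  have zg: "(\<Sum>i\<in>UNIV. z i \<bullet> g i) \<ge> (1 - \<delta>2^2/2) * Q"
  proof -
    have "(\<Sum>i\<in>UNIV. z i \<bullet> g i) \<ge> (\<Sum>i\<in>UNIV. z i \<bullet> e i - (\<delta>2^2 / 4) * (\<Sum>j\<in>UNIV. A$i$j * (norm (x i - x j))^2))"
      unfolding z_def g_def e_def by (rule sum_mono, rule zg_bound[OF xSt xb rows nonneg N2])
    also have "(\<Sum>i\<in>UNIV. z i \<bullet> e i - (\<delta>2^2 / 4) * (\<Sum>j\<in>UNIV. A$i$j * (norm (x i - x j))^2)) = Q - (\<delta>2^2/4) * (2 * Q)"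
    proof -
      have "(\<Sum>i\<in>UNIV. z i \<bullet> e i - (\<delta>2^2 / 4) * (\<Sum>j\<in>UNIV. A$i$j * (norm (x i - x j))^2)) =
        Q - (\<delta>2^2 / 4) * (\<Sum>i\<in>UNIV. \<Sum>j\<in>UNIV. A$i$j * (norm (x i - x j))^2)"
        unfolding Q_def by (simp only: sum_subtractf sum_distrib_left)
      then show ?thesis unfolding pw .
    qed
    finally show ?thesis by (simp add: algebra_simps)
  qed
  have gn: "(\<Sum>i\<in>UNIV. (norm (g i))^2) \<le> L * Q"
  proof -
    have "(\<Sum>i\<in>UNIV. (norm (g i))^2) \<le> (\<Sum>i\<in>UNIV. (norm (e i))^2)"
      unfolding g_def by (rule sum_mono, rule proj_norm[OF xSt])
    then show ?thesis using Q2 by simp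
  qed
  define m where "m = (1/n) *\<^sub>R (\<Sum>i\<in>UNIV. z i)"
  define u where "u i = z i - m" for i
  have su: "(\<Sum>i\<in>UNIV. u i) = 0"
    unfolding u_def m_def using n0 by (simp add: sum_subtractf n_def sum_constant_scaleR del: sum_constant)
  have eu: "u i - (\<Sum>j\<in>UNIV. A$i$j *\<^sub>R u j) = e i" for i
  proof -
    have "(\<Sum>j\<in>UNIV. A$i$j *\<^sub>R m) = m" using rows[of i] by (simp add: scaleR_sum_left[symmetric])
    then show ?thesis unfolding u_def e_z by (simp add: scaleR_diff_right sum_subtractf)
  qed
  have se: "(\<Sum>i\<in>UNIV. e i) = 0"
  proof -
    have "(\<Sum>i\<in>UNIV. \<Sum>j\<in>UNIV. A$i$j *\<^sub>R z j) = (\<Sum>j\<in>UNIV. z j)"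
      by (subst sum.swap) (simp add: scaleR_sum_left[symmetric] cols)
    then show ?thesis unfolding e_z by (simp add: sum_subtractf)
  qed
  have Qu: "(\<Sum>i\<in>UNIV. u i \<bullet> (u i - (\<Sum>j\<in>UNIV. A$i$j *\<^sub>R u j))) = Q"
  proof -
    have "(\<Sum>i\<in>UNIV. u i \<bullet> e i) = Q - m \<bullet> (\<Sum>i\<in>UNIV. e i)"
      unfolding u_def Q_def by (simp add: inner_diff_left sum_subtractf inner_sum_right)
    then show ?thesis using se eu by simp
  qed
  have sumz: "(\<Sum>i\<in>UNIV. z i) = n *\<^sub>R m" unfolding m_def using n0 by simp
  have Su: "(\<Sum>i\<in>UNIV. (norm (u i))^2) = Sz - n * (m \<bullet> m)"
  proof -
    have "(\<Sum>i\<in>UNIV. (norm (u i))^2) = Sz - 2 * (m \<bullet> (\<Sum>i\<in>UNIV. z i)) + n * (m \<bullet> m)"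
      unfolding u_def Sz_def n_def
      by (simp add: power2_norm_eq_inner inner_diff_left inner_diff_right inner_commute sum_subtractf
          sum.distrib inner_sum_right sum_distrib_left algebra_simps)
    then show ?thesis unfolding sumz by simp
  qed
  have mm: "n * (m \<bullet> m) \<le> (\<delta>1^2 / 4) * Sz"
  proof -
    have "n * (m \<bullet> m) = (norm (\<Sum>i\<in>UNIV. z i))^2 / n"
      unfolding sumz using n0 by (simp add: dot_square_norm power2_eq_square)
    also have "(norm (\<Sum>i\<in>UNIV. z i))^2 \<le> ((1/2) * Sz)^2"
      using mb unfolding z_def Sz_def by (intro power_mono) auto
    also have "((1/2) * Sz)^2 / n = (1/4) * Sz * (Sz / n)" by (simp add: power2_eq_square)
    also have "... \<le> (1/4) * Sz * \<delta>1^2"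
    proof (rule mult_left_mono)
      show "Sz / n \<le> \<delta>1^2" using N1 n0 unfolding Sz_def z_def n_def by (simp add: divide_le_eq mult.commute)
    qed (simp add: Sz_def sum_nonneg)
    finally show ?thesis using n0 by (simp add: divide_right_mono mult_ac)
  qed
  have Sz0: "Sz \<ge> 0" unfolding Sz_def by (simp add: sum_nonneg)
  have d1': "0 \<le> 1 - 4 * real CARD('r) * \<delta>1^2" using d1 by simp
  have Qmu: "Q \<ge> (1 - 4 * real CARD('r) * \<delta>1^2) * \<mu> * Sz"
  proof (cases "\<mu> \<ge> 0")
    case True
    have "\<mu> * (Sz - n * (m \<bullet> m)) \<le> Q"
      using spec_bounds(1)[OF sym nonneg rows, of u] su Qu Su unfolding \<mu>_def by simp
    moreover have "\<mu> * ((1 - \<delta>1^2/4) * Sz) \<le> \<mu> * (Sz - n * (m \<bullet> m))"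
      using mm True by (intro mult_left_mono) (auto simp: algebra_simps)
    moreover have "(1 - 4 * real CARD('r) * \<delta>1^2) * \<mu> * Sz \<le> \<mu> * ((1 - \<delta>1^2/4) * Sz)"
    proof -
      have r1: "real CARD('r) \<ge> 1" by simp
      have "\<delta>1^2/4 \<le> 4 * real CARD('r) * \<delta>1^2" using mult_right_mono[of 1 "16 * real CARD('r)" "\<delta>1^2"] r1 by simp
      then have "(1 - 4 * real CARD('r) * \<delta>1^2) * Sz \<le> (1 - \<delta>1^2/4) * Sz"
        using Sz0 by (intro mult_right_mono) auto
      then have "\<mu> * ((1 - 4 * real CARD('r) * \<delta>1^2) * Sz) \<le> \<mu> * ((1 - \<delta>1^2/4) * Sz)" using True by (rule mult_left_mono)
      then show ?thesis by (simp add: mult_ac)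
    qed
    ultimately show ?thesis by linarith
  next
    case False
    have "(1 - 4 * real CARD('r) * \<delta>1^2) * \<mu> * Sz \<le> 0"
      using False d1' Sz0 by (simp add: mult_nonneg_nonpos2 mult_nonpos_nonneg mult_nonneg_nonneg
          mult_le_0_iff zero_le_mult_iff)
    then show ?thesis using Q0 by linarith
  qed
  have expand: "(\<Sum>i\<in>UNIV. (norm (x i - \<alpha> *\<^sub>R g i - xb))^2) =
      Sz - 2 * \<alpha> * (\<Sum>i\<in>UNIV. z i \<bullet> g i) + \<alpha>^2 * (\<Sum>i\<in>UNIV. (norm (g i))^2)"
  proof -
    have "(norm (x i - \<alpha> *\<^sub>R g i - xb))^2 = (norm (z i))^2 - 2 * \<alpha> * (z i \<bullet> g i) + \<alpha>^2 * (norm (g i))^2" for i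
    proof -
      have "x i - \<alpha> *\<^sub>R g i - xb = z i - \<alpha> *\<^sub>R g i" unfolding z_def by simp
      then show ?thesis unfolding power2_norm_eq_inner
        by (simp add: inner_diff_left inner_diff_right inner_commute power2_eq_square algebra_simps)
    qed
    then show ?thesis unfolding Sz_def
      by (simp add: sum_subtractf sum.distrib sum_distrib_left)
  qed
  have "\<alpha>^2 * (\<Sum>i\<in>UNIV. (norm (g i))^2) \<le> \<alpha>^2 * (L * Q)"
    using gn by (simp add: mult_left_mono)
  also have "\<alpha>^2 * (L * Q) = \<alpha> * ((\<alpha> * L) * Q)" by (simp add: power2_eq_square)
  also have "... \<le> \<alpha> * ((1 - \<delta>2^2/2) * Q)"
    using aL Q0 alpha(1) by (intro mult_left_mono mult_right_mono) auto
  finally have t3: "\<alpha>^2 * (\<Sum>i\<in>UNIV. (norm (g i))^2) \<le> \<alpha> * ((1 - \<delta>2^2/2) * Q)" .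
  have t2: "2 * \<alpha> * ((1 - \<delta>2^2/2) * Q) \<le> 2 * \<alpha> * (\<Sum>i\<in>UNIV. z i \<bullet> g i)"
    using zg alpha(1) by simp
  have t4: "\<alpha> * ((1 - \<delta>2^2/2) * ((1 - 4 * real CARD('r) * \<delta>1^2) * \<mu> * Sz)) \<le> \<alpha> * ((1 - \<delta>2^2/2) * Q)"
    using Qmu alpha(1) d2 by (intro mult_left_mono) auto
  have "(\<Sum>i\<in>UNIV. (norm (x i - \<alpha> *\<^sub>R g i - xb))^2) \<le> Sz - \<alpha> * ((1 - \<delta>2^2/2) * Q)"
    unfolding expand using t2 t3 by linarith
  also have "... \<le> Sz - \<alpha> * ((1 - \<delta>2^2/2) * ((1 - 4 * real CARD('r) * \<delta>1^2) * \<mu> * Sz))"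
    using t4 by linarith
  also have "... = (1 - (1 - 4 * real CARD('r) * \<delta>1^2) * (1 - \<delta>2^2/2) * \<mu> * \<alpha>) * Sz"
    by (simp add: algebra_simps)
  finally show ?thesis unfolding g_def e_def Sz_def z_def \<mu>_def .
qed

lemma matpow_comm: "W ** matpow W k = matpow W k ** (W::real^'n^'n)"
proof (induction k)
  case 0 then show ?case by simp
next
  case (Suc k)
  have "W ** matpow W (Suc k) = W ** (matpow W k ** W)" using Suc by simp
  also have "... = matpow W (Suc k) ** W" by (simp add: matrix_mul_assoc)
  finally show ?case .
qed

lemma matpow_sym: "transpose W = W \<Longrightarrow> transpose (matpow W k) = matpow (W::real^'n^'n) k"
  by (induction k) (simp_all add: matrix_transpose_mul matpow_comm)

lemma matpow_nonneg: "(\<And>i j. (W::real^'n^'n)$i$j \<ge> 0) \<Longrightarrow> matpow W k $ i $ j \<ge> 0"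
proof (induction k arbitrary: i j)
  case 0 then show ?case by (simp add: mat_def)
next
  case (Suc k) then show ?case by (simp add: matrix_matrix_mult_def sum_nonneg)
qed

lemma matpow_rows: "(\<And>i. (\<Sum>j\<in>UNIV. (W::real^'n^'n)$i$j) = 1) \<Longrightarrow> (\<Sum>j\<in>UNIV. matpow W k $ i $ j) = 1"
proof (induction k arbitrary: i)
  case 0 then show ?case by (simp add: mat_def)
next
  case (Suc k)
  have "(\<Sum>j\<in>UNIV. matpow W (Suc k) $ i $ j) = (\<Sum>m\<in>UNIV. W$i$m * (\<Sum>j\<in>UNIV. matpow W k $ m $ j))"
    by (simp add: matrix_matrix_mult_def sum_distrib_left) (rule sum.swap)
  also have "... = 1" using Suc by simp
  finally show ?case .
qed

lemma tnorm_norm: "tnorm f = norm (vec_lambda f)"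
  by (simp add: tnorm_def norm_vec_def L2_set_def)

lemma tnorm_add:
  fixes a b :: "'n::finite \<Rightarrow> real^'r^'d"
  shows "tnorm (\<lambda>i. a i + b i) \<le> tnorm a + tnorm b"
proof -
  have "vec_lambda (\<lambda>i. a i + b i) = vec_lambda a + vec_lambda b" by (simp add: vec_eq_iff)
  then show ?thesis unfolding tnorm_norm by (simp add: norm_triangle_ineq)
qed

lemma tnorm_scale:
  fixes a :: "'n::finite \<Rightarrow> real^'r^'d"
  assumes c: "c \<ge> 0"
  shows "tnorm (\<lambda>i. c *\<^sub>R a i) = c * tnorm a"
proof -
  have "vec_lambda (\<lambda>i. c *\<^sub>R a i) = c *\<^sub>R vec_lambda a" by (simp add: vec_eq_iff)
  then show ?thesis unfolding tnorm_norm using c by simp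
qed

lemma tnorm_mono: "(\<And>i. norm (a i) \<le> norm (b i)) \<Longrightarrow> tnorm a \<le> tnorm b"
  unfolding tnorm_def by (intro real_sqrt_le_mono sum_mono power_mono) auto

theorem mainTheorem2:
  fixes E :: "'n::finite \<Rightarrow> 'n \<Rightarrow> bool"
    and W :: "real^'n^'n"
    and R :: "real^'r^'d \<Rightarrow> real^'r^'d \<Rightarrow> real^'r^'d"
    and M \<delta>1 \<delta>2 \<alpha> \<beta> :: real
    and t :: nat
    and x x' v :: "'n \<Rightarrow> real^'r^'d"
    and xb xb' :: "real^'r^'d"
  assumes dr: "CARD('r) \<le> CARD('d)"
    and graph: "connected_graph E"
    and mix: "mixing_matrix E W"
    and sig2: "0 < singval W 2" "singval W 2 < 1"
    and retr: "is_retraction R"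
    and Mpos: "M > 0"
    and retr1: "\<And>y z \<xi>. y \<in> stiefel \<Longrightarrow> z \<in> stiefel \<Longrightarrow> \<xi> \<in> tangent y \<Longrightarrow>
                  norm (R y \<xi> - z) \<le> norm (y + \<xi> - z)"
    and retr2: "\<And>y \<xi>. y \<in> stiefel \<Longrightarrow> \<xi> \<in> tangent y \<Longrightarrow>
                  norm (R y \<xi> - (y + \<xi>)) \<le> M * (norm \<xi>)\<^sup>2"
    and d1: "\<delta>1 > 0" "\<delta>1 \<le> \<delta>2 / (5 * sqrt (real CARD('r)))"
    and d2: "\<delta>2 > 0" "\<delta>2 \<le> 1/6"
    and tbound: "int t \<ge> \<lceil>log (singval W 2) (1 / (2 * sqrt (real CARD('n))))\<rceil>"
    and alpha: "0 < \<alpha>" "\<alpha> \<le> (2 - \<delta>2\<^sup>2) / (2 * (1 - eigval_min (matpow W t)))"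
               "\<alpha> \<le> 1" "\<alpha> \<le> 1 / M"
    and xSt: "\<And>i. x i \<in> stiefel"
    and xbIAM: "is_IAM x xb"
    and N1: "(\<Sum>i\<in>UNIV. (norm (x i - xb))\<^sup>2) \<le> real CARD('n) * \<delta>1\<^sup>2"
    and N2: "\<And>i. norm (x i - xb) \<le> \<delta>2"
    and beta: "\<beta> \<ge> 0"
    and vT: "\<And>i. v i \<in> tangent (x i)"
    and upd: "\<And>i. x' i = R (x i) (- \<alpha> *\<^sub>R grad_phi W t x i + \<beta> *\<^sub>R v i)"
    and xb'IAM: "is_IAM x' xb'"
  shows "tnorm (\<lambda>i. x' i - xb') \<le>
           sqrt (1 - (1 - 4 * real CARD('r) * \<delta>1\<^sup>2) * (1 - \<delta>2\<^sup>2 / 2)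
                       * (1 - eigval (matpow W t) 2) * \<alpha>) * tnorm (\<lambda>i. x i - xb)
           + \<beta> * tnorm v"

proof -
  define A where "A = matpow W t"
  have symW: "transpose W = W" and nnW: "\<And>i j. W$i$j \<ge> 0" and rW: "\<And>i. (\<Sum>j\<in>UNIV. W$i$j) = 1"
    using mix unfolding mixing_matrix_def by auto
  have symA: "transpose A = A" unfolding A_def by (rule matpow_sym[OF symW])
  have nnA: "\<And>i j. A$i$j \<ge> 0" unfolding A_def by (rule matpow_nonneg[OF nnW])
  have rA: "\<And>i. (\<Sum>j\<in>UNIV. A$i$j) = 1" unfolding A_def by (rule matpow_rows[OF rW])
  have xb: "xb \<in> stiefel" using xbIAM by (simp add: is_IAM_def)
  define g where "g i = grad_phi W t x i" for i
  have g_eq: "g i = proj_tangent (x i) (x i - (\<Sum>j\<in>UNIV. A$i$j *\<^sub>R x j))" for i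
    unfolding g_def grad_phi_def A_def ..
  have mb: "norm (\<Sum>i\<in>UNIV. x i - xb) \<le> (1/2) * (\<Sum>i\<in>UNIV. (norm (x i - xb))^2)"
    by (rule mbound[OF xSt xb]) (rule iam_fo2[OF retr xbIAM])
  have r1: "real CARD('r) \<ge> 1" by simp
  have d1': "4 * real CARD('r) * \<delta>1^2 \<le> 1"
  proof -
    have "\<delta>1^2 \<le> (\<delta>2 / (5 * sqrt (real CARD('r))))^2" using d1 by (intro power_mono) auto
    also have "... = \<delta>2^2 / (25 * real CARD('r))" by (simp add: power_divide power_mult_distrib)
    finally have "4 * real CARD('r) * \<delta>1^2 \<le> 4 * real CARD('r) * (\<delta>2^2 / (25 * real CARD('r)))"
      using r1 by (intro mult_left_mono) auto
    also have "... = 4 * \<delta>2^2 / 25" using r1 by (simp add: field_simps)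
    also have "... \<le> 1"
    proof -
      have "\<delta>2^2 \<le> (1/6)^2" using d2 by (intro power_mono) auto
      moreover have "(1/6::real)^2 = 1/36" by (simp add: power2_eq_square)
      ultimately show ?thesis by linarith
    qed
    finally show ?thesis .
  qed
  have d2': "\<delta>2^2 \<le> 1"
  proof -
    have "\<delta>2^2 \<le> (1/6)^2" using d2 by (intro power_mono) auto
    moreover have "(1/6::real)^2 = 1/36" by (simp add: power2_eq_square)
    ultimately show ?thesis by linarith
  qed
  have coreI: "(\<Sum>i\<in>UNIV. (norm (x i - \<alpha> *\<^sub>R g i - xb))^2)
    \<le> (1 - (1 - 4 * real CARD('r) * \<delta>1^2) * (1 - \<delta>2^2/2) * (1 - eigval A 2) * \<alpha>) * (\<Sum>i\<in>UNIV. (norm (x i - xb))^2)"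
    unfolding g_eq
    by (rule core[OF xSt xb symA nnA rA mb N1 N2 d1' d2' alpha(1)]) (use alpha(2) A_def in simp)
  define \<rho> where "\<rho> = sqrt (1 - (1 - 4 * real CARD('r) * \<delta>1^2) * (1 - \<delta>2^2/2) * (1 - eigval A 2) * \<alpha>)"
  have s1: "tnorm (\<lambda>i. x' i - xb') \<le> tnorm (\<lambda>i. x' i - xb)"
  proof -
    have "(\<Sum>i\<in>UNIV. (norm (xb' - x' i))\<^sup>2) \<le> (\<Sum>i\<in>UNIV. (norm (xb - x' i))\<^sup>2)"
      using xb'IAM xb unfolding is_IAM_def by blast
    then show ?thesis unfolding tnorm_def by (simp add: norm_minus_commute)
  qed
  have s2: "tnorm (\<lambda>i. x' i - xb) \<le> tnorm (\<lambda>i. (x i - \<alpha> *\<^sub>R g i - xb) + \<beta> *\<^sub>R v i)"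
  proof (rule tnorm_mono)
    fix i
    have gT: "g i \<in> tangent (x i)" unfolding g_def grad_phi_def by (rule proj_tangent_in[OF xSt])
    have xiT: "- \<alpha> *\<^sub>R g i + \<beta> *\<^sub>R v i \<in> tangent (x i)"
      by (intro tangent_add tangent_scale gT vT)
    have "norm (x' i - xb) \<le> norm (x i + (- \<alpha> *\<^sub>R g i + \<beta> *\<^sub>R v i) - xb)"
      unfolding upd g_def[symmetric] by (rule retr1[OF xSt xb xiT])
    also have "x i + (- \<alpha> *\<^sub>R g i + \<beta> *\<^sub>R v i) - xb = (x i - \<alpha> *\<^sub>R g i - xb) + \<beta> *\<^sub>R v i" by simp
    finally show "norm (x' i - xb) \<le> norm ((x i - \<alpha> *\<^sub>R g i - xb) + \<beta> *\<^sub>R v i)" .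
  qed
  have s3: "tnorm (\<lambda>i. (x i - \<alpha> *\<^sub>R g i - xb) + \<beta> *\<^sub>R v i) \<le> tnorm (\<lambda>i. x i - \<alpha> *\<^sub>R g i - xb) + \<beta> * tnorm v"
    using tnorm_add[of "\<lambda>i. x i - \<alpha> *\<^sub>R g i - xb" "\<lambda>i. \<beta> *\<^sub>R v i"] tnorm_scale[OF beta, of v] by simp
  have s4: "tnorm (\<lambda>i. x i - \<alpha> *\<^sub>R g i - xb) \<le> \<rho> * tnorm (\<lambda>i. x i - xb)"
  proof -
    have "tnorm (\<lambda>i. x i - \<alpha> *\<^sub>R g i - xb) \<le> sqrt ((1 - (1 - 4 * real CARD('r) * \<delta>1^2) * (1 - \<delta>2^2/2) * (1 - eigval A 2) * \<alpha>) * (\<Sum>i\<in>UNIV. (norm (x i - xb))^2))"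
      unfolding tnorm_def using coreI by (rule real_sqrt_le_mono)
    also have "... = \<rho> * tnorm (\<lambda>i. x i - xb)" unfolding \<rho>_def tnorm_def by (rule real_sqrt_mult)
    finally show ?thesis .
  qed
  show ?thesis using s1 s2 s3 s4 unfolding \<rho>_def A_def by linarith
qed


end
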